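(* Let $(r,t,s)$ be a vertex of the Farey tree $\mathrm{F}\mathbb T$ with $t\in(0,\infty)\cap\mathbb Q$. Then: (1) If $r=\frac01$ and $s\neq\frac10$, and the symmetric decomposition of $\omega_s$ is $w\alpha w^{-1}$, then $\omega_t=yz\,w\alpha^{-1}w^{-1}$. (2) If $r\neq\frac01$ and $s=\frac10$, and the symmetric decomposition of $\omega_r$ is $u\beta u^{-1}$, then $\omega_t=u\beta^{-1}u^{-1}\,xy$. (3) If $r\neq\frac01$ and $s\neq\frac10$, and the symmetric decompositions of $\omega_r$ and $\omega_s$ are $u\beta u^{-1}$ and $w\alpha w^{-1}$ respectively, then $\omega_t=u\beta^{-1}u^{-1}\,xyz\,w\alpha^{-1}w^{-1}$. All equalities are equalities of words.
   Context: Farey tree $\mathrm{F}\mathbb T$: rooted planar binary tree with root $(\frac01,\frac11,\frac10)$, and each vertex $(\frac ab,\frac cd,\frac ef)$ has left child $(\frac ab,\frac{a+c}{b+d},\frac cd)$ and right child $(\frac cd,\frac{c+e}{d+f},\frac ef)$; $\frac10$ represents $\infty$. Modified lattice: the planar graph with vertex set $\mathbb Z^2$ whose edges are the horizontal unit segments, the vertical unit segments, and the diagonal segments of slope $-1$ joining $(i,j+1)$ and $(i+1,j)$. Words $\omega_t$: $\omega_{0/1}=x$, $\omega_{1/0}=z$. For reduced $t=p/q\in(0,\infty)$, let $L_t$ be the segment from $(0,0)$ to $(q,p)$, oriented from $(0,0)$ to $(q,p)$. List the edges whose relative interior meets $L_t$, in the order of the intersection points along $L_t$. A horizontal (resp.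 diagonal, vertical) edge contributes $x$ (resp. $y$, $z$) if its midpoint is not on the right-hand side of $L_t$ (including lying on $L_t$), and $x^{-1}$ (resp. $y^{-1}$, $z^{-1}$) if its midpoint is on the right-hand side. $\omega_t$ is the concatenation of these letters. Symmetric decomposition: every $\omega_t$ can be written as a word $w\alpha w^{-1}$ with $w$ a word and $\alpha\in\{x,y,z\}$ a letter; this expression is called the symmetric decomposition of $\omega_t$. *)

theory Defs
  imports Complex_Main
begin

datatype gen = X | Y | Z

text \<open>A letter is a generator with a sign: (g, True) is g, (g, False) is g inverse.\<close>
type_synonym letter = "gen \<times> bool"
type_synonym word = "letter list"

definition inv_letter :: "letter \<Rightarrow> letter" where
  "inv_letter l = (fst l, \<not> snd l)"

definition inv_word :: "word \<Rightarrow> word" where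
  "inv_word w = rev (map inv_letter w)"

abbreviation lx :: letter where "lx \<equiv> (X, True)"
abbreviation ly :: letter where "ly \<equiv> (Y, True)"
abbreviation lz :: letter where "lz \<equiv> (Z, True)"

text \<open>A fraction a/b is represented by the pair (a, b) of naturals; (1,0) is infinity.
  A vertex is a triple of such pairs.\<close>
type_synonym frac = "nat \<times> nat"

inductive farey_vertex :: "frac \<times> frac \<times> frac \<Rightarrow> bool" where
  root: "farey_vertex ((0,1), (1,1), (1,0))"
| left: "farey_vertex ((a,b), (c,d), (e,f)) \<Longrightarrow> farey_vertex ((a,b), (a+c, b+d), (c,d))"
| right: "farey_vertex ((a,b), (c,d), (e,f)) \<Longrightarrow> farey_vertex ((c,d), (c+e, d+f), (e,f))"

datatype edge = Hor int int | Ver int int | Dia int int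

fun edge_start :: "edge \<Rightarrow> real \<times> real" where
  "edge_start (Hor i j) = (of_int i, of_int j)"
| "edge_start (Ver i j) = (of_int i, of_int j)"
| "edge_start (Dia i j) = (of_int i, of_int j + 1)"

fun edge_end :: "edge \<Rightarrow> real \<times> real" where
  "edge_end (Hor i j) = (of_int i + 1, of_int j)"
| "edge_end (Ver i j) = (of_int i, of_int j + 1)"
| "edge_end (Dia i j) = (of_int i + 1, of_int j)"

fun edge_gen :: "edge \<Rightarrow> gen" where
  "edge_gen (Hor i j) = X"
| "edge_gen (Dia i j) = Y"
| "edge_gen (Ver i j) = Z"

definition crosses_at :: "nat \<Rightarrow> nat \<Rightarrow> edge \<Rightarrow> real \<Rightarrow> bool" where
  "crosses_at p q e s \<longleftrightarrow> 0 \<le> s \<and> s \<le> 1 \<and>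
     (\<exists>lam. 0 < lam \<and> lam < 1 \<and>
        fst (edge_start e) + lam * (fst (edge_end e) - fst (edge_start e)) = s * real q \<and>
        snd (edge_start e) + lam * (snd (edge_end e) - snd (edge_start e)) = s * real p)"

definition crossing_edges :: "nat \<Rightarrow> nat \<Rightarrow> edge set" where
  "crossing_edges p q = {e. \<exists>s. crosses_at p q e s}"

definition cross_param :: "nat \<Rightarrow> nat \<Rightarrow> edge \<Rightarrow> real" where
  "cross_param p q e = (THE s. crosses_at p q e s)"

text \<open>Letter contributed by an edge: positive iff the midpoint is not strictly on the
  right-hand side of L oriented from (0,0) to (q,p), i.e. iff q*my - p*mx >= 0.\<close>
definition edge_letter :: "nat \<Rightarrow> nat \<Rightarrow> edge \<Rightarrow> letter" where
  "edge_letter p q e =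
     (let mx = (fst (edge_start e) + fst (edge_end e)) / 2;
          my = (snd (edge_start e) + snd (edge_end e)) / 2
      in (edge_gen e, real q * my - real p * mx \<ge> 0))"

definition omega_geom :: "nat \<Rightarrow> nat \<Rightarrow> word" where
  "omega_geom p q = (THE ws. \<exists>es. distinct es \<and> set es = crossing_edges p q \<and>
       sorted (map (cross_param p q) es) \<and> ws = map (edge_letter p q) es)"

definition omega :: "frac \<Rightarrow> word" where
  "omega t = (let a = fst t; b = snd t; g = gcd a b; p = a div g; q = b div g in
     if p = 0 then [lx] else if q = 0 then [lz] else omega_geom p q)"

end

theory Submission
  imports Defs
begin

definition Sg :: "int \<Rightarrow> int \<Rightarrow> int \<Rightarrow> int \<Rightarrow> int" where
  "Sg p q u v = u*p - v*q"

fun crossI :: "int \<Rightarrow> int \<Rightarrow> edge \<Rightarrow> bool" where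
  "crossI p q (Ver i j) \<longleftrightarrow> 0 < i \<and> i < q \<and> Sg p q i j > 0 \<and> Sg p q i (j+1) < 0"
| "crossI p q (Hor i j) \<longleftrightarrow> 0 \<le> i \<and> i < q \<and> Sg p q i j < 0 \<and> Sg p q (i+1) j > 0"
| "crossI p q (Dia i j) \<longleftrightarrow> 0 \<le> i \<and> i < q \<and> Sg p q (i+1) j > 0 \<and> Sg p q i (j+1) < 0"

fun Pn :: "int \<Rightarrow> int \<Rightarrow> edge \<Rightarrow> real" where
  "Pn p q (Ver i j) = of_int i / of_int q"
| "Pn p q (Hor i j) = of_int j / of_int p"
| "Pn p q (Dia i j) = of_int (i+j+1) / of_int (p+q)"

fun mx2 :: "edge \<Rightarrow> int" where
  "mx2 (Ver i j) = 2*i" | "mx2 (Hor i j) = 2*i+1" | "mx2 (Dia i j) = 2*i+1"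
fun my2 :: "edge \<Rightarrow> int" where
  "my2 (Ver i j) = 2*j+1" | "my2 (Hor i j) = 2*j" | "my2 (Dia i j) = 2*j+1"

definition posI :: "int \<Rightarrow> int \<Rightarrow> edge \<Rightarrow> bool" where
  "posI p q e \<longleftrightarrow> Sg p q (mx2 e) (my2 e) \<le> 0"

lemma real_int_le0:
  "(real_of_int A * real p - real_of_int B * real q \<le> 0) \<longleftrightarrow> (A * int p - B * int q \<le> 0)"
proof -
  have "real_of_int (A * int p - B * int q) = real_of_int A * real p - real_of_int B * real q" by simp
  then show ?thesis by (metis of_int_le_0_iff)
qed

lemma edge_letter_eq: "edge_letter p q e = (edge_gen e, posI (int p) (int q) e)"
proof (cases e)
  case (Hor i j)
  have "(real q * real_of_int j - real p * ((real_of_int i + (real_of_int i + 1)) / 2) \<ge> 0)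
     \<longleftrightarrow> real_of_int (2*i+1) * real p - real_of_int (2*j) * real q \<le> 0"
    by (simp add: algebra_simps)
  then show ?thesis using Hor unfolding edge_letter_def posI_def Sg_def Let_def real_int_le0 by simp
next
  case (Ver i j)
  have "(real q * ((real_of_int j + (real_of_int j + 1)) / 2) - real p * real_of_int i \<ge> 0)
     \<longleftrightarrow> real_of_int (2*i) * real p - real_of_int (2*j+1) * real q \<le> 0"
    by (simp add: algebra_simps)
  then show ?thesis using Ver unfolding edge_letter_def posI_def Sg_def Let_def real_int_le0 by simp
next
  case (Dia i j)
  have "(real q * ((real_of_int j + 1 + real_of_int j) / 2) - real p * ((real_of_int i + (real_of_int i + 1)) / 2) \<ge> 0)
     \<longleftrightarrow> real_of_int (2*i+1) * real p - real_of_int (2*j+1) * real q \<le> 0"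
    by (simp add: field_simps) (simp only: mult.assoc[symmetric], linarith)
  then show ?thesis using Dia unfolding edge_letter_def posI_def Sg_def Let_def real_int_le0 by simp
qed

lemma Sg_real: "real_of_int (Sg (int p) (int q) u v) = real_of_int u * real p - real_of_int v * real q"
  by (simp add: Sg_def)

lemma canc_lt: "0 < (q::int) \<Longrightarrow> x*q < y*q \<longleftrightarrow> x < y"
  by simp
lemma canc_le: "0 < (q::int) \<Longrightarrow> x*q \<le> y*q \<longleftrightarrow> x \<le> y"
  by simp

lemma ver_range:
  assumes q: "0 < (q::int)" and p: "0 \<le> p" and s1: "Sg p q i j > 0" and s2: "Sg p q i (j+1) < 0"
  shows "(0 < i \<and> i < q) \<longleftrightarrow> (0 \<le> i \<and> i \<le> q)"
proof
  assume "0 \<le> i \<and> i \<le> q"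
  moreover have "i \<noteq> 0"
  proof
    assume "i = 0"
    then have "j*q < 0" "0 < (j+1)*q" using s1 s2 by (simp_all add: Sg_def)
    then have "j < 0" "0 < j+1" using q by (simp_all add: mult_less_0_iff zero_less_mult_iff)
    then show False by linarith
  qed
  moreover have "i \<noteq> q"
  proof
    assume "i = q"
    then have "j*q < q*p" "q*p < (j+1)*q" using s1 s2 by (simp_all add: Sg_def)
    then have "j*q < p*q" "p*q < (j+1)*q" by (simp_all add: mult.commute)
    then have "j < p" "p < j+1" using canc_lt[OF q] by blast+
    then show False by linarith
  qed
  ultimately show "0 < i \<and> i < q" by auto
qed auto

lemma hor_range:
  assumes q: "0 < (q::int)" and p: "0 < p" and s1: "Sg p q i j < 0" and s2: "Sg p q (i+1) j > 0"
  shows "(0 \<le> i \<and> i < q) \<longleftrightarrow> (0 \<le> j \<and> j \<le> p)"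
proof
  assume h: "0 \<le> i \<and> i < q"
  have a: "i*p < j*q" "j*q < (i+1)*p" using s1 s2 by (simp_all add: Sg_def)
  have "0 \<le> i*p" using h p by simp
  then have "0 < j*q" using a by simp
  then have "0 \<le> j" using q by (simp add: zero_less_mult_iff)
  moreover have "(i+1)*p \<le> q*p" using h p by (intro mult_right_mono) auto
  then have "j*q < q*p" using a by linarith
  then have "j*q < p*q" by (simp add: mult.commute)
  then have "j \<le> p" using canc_lt[OF q, of j p] by simp
  ultimately show "0 \<le> j \<and> j \<le> p" by simp
next
  assume h: "0 \<le> j \<and> j \<le> p"
  have a: "i*p < j*q" "j*q < (i+1)*p" using s1 s2 by (simp_all add: Sg_def)
  have "j*q \<le> p*q" using h q by (intro mult_right_mono) auto
  then have "i*p < p*q" using a by linarith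
  then have "i*p < q*p" by (simp add: mult.commute)
  then have "i < q" using canc_lt[OF p, of i q] by simp
  moreover have "0 \<le> j*q" using h q by simp
  then have "0 < (i+1)*p" using a by simp
  then have "0 \<le> i" using p by (simp add: zero_less_mult_iff)
  ultimately show "0 \<le> i \<and> i < q" by simp
qed

lemma dia_range:
  assumes q: "0 < (q::int)" and p: "0 < p" and s1: "Sg p q (i+1) j > 0" and s2: "Sg p q i (j+1) < 0"
  shows "(0 \<le> i \<and> i < q) \<longleftrightarrow> (0 \<le> i+j+1 \<and> i+j+1 \<le> p+q)"
proof
  assume h: "0 \<le> i \<and> i < q"
  have a: "j*q < (i+1)*p" "i*p < (j+1)*q" using s1 s2 by (simp_all add: Sg_def)
  have "0 \<le> i*p" using h p by simp
  then have "0 < (j+1)*q" using a by simp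
  then have "0 \<le> j" using q by (simp add: zero_less_mult_iff)
  moreover have "(i+1)*p \<le> q*p" using h p by (intro mult_right_mono) auto
  then have "j*q < q*p" using a by linarith
  then have "j*q < p*q" by (simp add: mult.commute)
  then have "j < p" using canc_lt[OF q, of j p] by simp
  ultimately show "0 \<le> i+j+1 \<and> i+j+1 \<le> p+q" using h by simp
next
  assume h: "0 \<le> i+j+1 \<and> i+j+1 \<le> p+q"
  have a: "j*q < (i+1)*p" "i*p < (j+1)*q" using s1 s2 by (simp_all add: Sg_def)
  have "0 \<le> i"
  proof (rule ccontr)
    assume "\<not> 0 \<le> i"
    then have "(i+1)*p \<le> 0*p" using p by (intro mult_right_mono) auto
    then have "j*q < 0" using a by simp
    then have "j < 0" using q by (simp add: mult_less_0_iff)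
    then show False using h \<open>\<not> 0 \<le> i\<close> by linarith
  qed
  moreover have "i < q"
  proof (rule ccontr)
    assume "\<not> i < q"
    then have "q*p \<le> i*p" using p by (intro mult_right_mono) auto
    then have "q*p < (j+1)*q" using a by linarith
    then have "p*q < (j+1)*q" by (simp add: mult.commute)
    then have "p < j+1" using canc_lt[OF q, of p "j+1"] by simp
    then show False using h \<open>\<not> i < q\<close> by linarith
  qed
  ultimately show "0 \<le> i \<and> i < q" by simp
qed

lemma pos_mult_real: "0 < (q::real) \<Longrightarrow> (0 < x * q) = (0 < x)"
  by (simp add: zero_less_mult_iff)

lemma crosses_Ver:
  fixes p q :: nat assumes p: "0 < p" and q: "0 < q"
  shows "crosses_at p q (Ver i j) s \<longleftrightarrow> crossI (int p) (int q) (Ver i j) \<and> s = Pn (int p) (int q) (Ver i j)"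
proof -
  have cI: "crossI (int p) (int q) (Ver i j) \<longleftrightarrow> 0 \<le> i \<and> i \<le> int q \<and> Sg (int p) (int q) i j > 0 \<and> Sg (int p) (int q) i (j+1) < 0"
    using ver_range[of "int q" "int p" i j] p q by auto
  have qr: "0 < real q" using q by simp
  have key: "real_of_int i = s * real q \<Longrightarrow> real_of_int (Sg (int p) (int q) i j) = (s * real p - real_of_int j) * real q"
    "real_of_int i = s * real q \<Longrightarrow> real_of_int (Sg (int p) (int q) i (j+1)) = (s * real p - real_of_int j - 1) * real q"
    by (simp_all add: Sg_real algebra_simps)
  show ?thesis
  proof
    assume "crosses_at p q (Ver i j) s"
    then obtain lam where s0: "0 \<le> s" "s \<le> 1" and l: "0 < lam" "lam < 1"
      and e1: "real_of_int i = s * real q" and e2: "real_of_int j + lam = s * real p"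
      unfolding crosses_at_def by auto
    have sv: "s = Pn (int p) (int q) (Ver i j)" using e1 qr by (simp add: field_simps)
    have "0 < real_of_int (Sg (int p) (int q) i j)" using key(1)[OF e1] e2 l qr by (simp add: zero_less_mult_iff)
    moreover have "real_of_int (Sg (int p) (int q) i (j+1)) < 0" using key(2)[OF e1] e2 l qr by (simp add: mult_less_0_iff)
    moreover have "0 \<le> real_of_int i" using e1 s0 qr by simp
    then have "0 \<le> i" by simp
    moreover have "real_of_int i \<le> real q" using e1 s0 qr by (simp add: mult_le_cancel_right1)
    ultimately show "crossI (int p) (int q) (Ver i j) \<and> s = Pn (int p) (int q) (Ver i j)"
      using cI sv by simp
  next
    assume h: "crossI (int p) (int q) (Ver i j) \<and> s = Pn (int p) (int q) (Ver i j)"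
    then have sv: "s = real_of_int i / real q" by simp
    have e1: "real_of_int i = s * real q" using sv qr by simp
    have h2: "0 \<le> i" "i \<le> int q" "Sg (int p) (int q) i j > 0" "Sg (int p) (int q) i (j+1) < 0" using h cI by auto
    define lam where "lam = s * real p - real_of_int j"
    have "0 < real_of_int (Sg (int p) (int q) i j)" using h2(3) by simp
    then have "0 < lam * real q" using key(1)[OF e1] by (simp add: lam_def)
    then have "0 < lam" using qr by (simp add: zero_less_mult_iff)
    moreover have "real_of_int (Sg (int p) (int q) i (j+1)) < 0" using h2(4) by simp
    then have "(lam - 1) * real q < 0" using key(2)[OF e1] by (simp add: lam_def)
    then have "lam < 1" using qr by (simp add: mult_less_0_iff)
    moreover have "0 \<le> s" "s \<le> 1" using sv h2 qr by auto
    ultimately show "crosses_at p q (Ver i j) s" unfolding crosses_at_def using e1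
      by (auto simp: lam_def intro!: exI[of _ lam])
  qed
qed

lemma crosses_Hor:
  fixes p q :: nat assumes p: "0 < p" and q: "0 < q"
  shows "crosses_at p q (Hor i j) s \<longleftrightarrow> crossI (int p) (int q) (Hor i j) \<and> s = Pn (int p) (int q) (Hor i j)"
proof -
  have cI: "crossI (int p) (int q) (Hor i j) \<longleftrightarrow> 0 \<le> j \<and> j \<le> int p \<and> Sg (int p) (int q) i j < 0 \<and> Sg (int p) (int q) (i+1) j > 0"
    using hor_range[of "int q" "int p" i j] p q by auto
  have pr: "0 < real p" using p by simp
  have key: "real_of_int j = s * real p \<Longrightarrow> real_of_int (Sg (int p) (int q) i j) = - ((s * real q - real_of_int i) * real p)"
    "real_of_int j = s * real p \<Longrightarrow> real_of_int (Sg (int p) (int q) (i+1) j) = (1 - (s * real q - real_of_int i)) * real p"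
    by (simp_all add: Sg_real algebra_simps)
  show ?thesis
  proof
    assume "crosses_at p q (Hor i j) s"
    then obtain lam where s0: "0 \<le> s" "s \<le> 1" and l: "0 < lam" "lam < 1"
      and e1: "real_of_int i + lam = s * real q" and e2: "real_of_int j = s * real p"
      unfolding crosses_at_def by auto
    have sv: "s = Pn (int p) (int q) (Hor i j)" using e2 pr by (simp add: field_simps)
    have lq: "lam = s * real q - real_of_int i" using e1 by simp
    have "real_of_int (Sg (int p) (int q) i j) < 0" using key(1)[OF e2] l pr lq by simp
    moreover have "0 < real_of_int (Sg (int p) (int q) (i+1) j)" using key(2)[OF e2] l pr lq by simp
    moreover have "0 \<le> real_of_int j" using e2 s0 pr by simp
    then have "0 \<le> j" by simp
    moreover have "real_of_int j \<le> real p" using e2 s0 pr by (simp add: mult_le_cancel_right1)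
    ultimately show "crossI (int p) (int q) (Hor i j) \<and> s = Pn (int p) (int q) (Hor i j)"
      using cI sv by simp
  next
    assume h: "crossI (int p) (int q) (Hor i j) \<and> s = Pn (int p) (int q) (Hor i j)"
    then have sv: "s = real_of_int j / real p" by simp
    have e2: "real_of_int j = s * real p" using sv pr by simp
    have h2: "0 \<le> j" "j \<le> int p" "Sg (int p) (int q) i j < 0" "Sg (int p) (int q) (i+1) j > 0" using h cI by auto
    define lam where "lam = s * real q - real_of_int i"
    have "real_of_int (Sg (int p) (int q) i j) < 0" using h2(3) by simp
    then have "0 < lam * real p" using key(1)[OF e2] by (simp add: lam_def)
    then have "0 < lam" using pr by (simp add: zero_less_mult_iff)
    moreover have "0 < real_of_int (Sg (int p) (int q) (i+1) j)" using h2(4) by simp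
    then have "0 < (1 - lam) * real p" using key(2)[OF e2] by (simp add: lam_def)
    then have "lam < 1" using pr by (simp add: zero_less_mult_iff)
    moreover have "0 \<le> s" "s \<le> 1" using sv h2 pr by auto
    ultimately show "crosses_at p q (Hor i j) s" unfolding crosses_at_def using e2
      by (auto simp: lam_def intro!: exI[of _ lam])
  qed
qed

lemma crosses_Dia:
  fixes p q :: nat assumes p: "0 < p" and q: "0 < q"
  shows "crosses_at p q (Dia i j) s \<longleftrightarrow> crossI (int p) (int q) (Dia i j) \<and> s = Pn (int p) (int q) (Dia i j)"
proof -
  have cI: "crossI (int p) (int q) (Dia i j) \<longleftrightarrow> 0 \<le> i+j+1 \<and> i+j+1 \<le> int p + int q \<and> Sg (int p) (int q) (i+1) j > 0 \<and> Sg (int p) (int q) i (j+1) < 0"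
    using dia_range[of "int q" "int p" i j] p q by auto
  have pr: "0 < real p + real q" using p by simp
  have key: "real_of_int (Sg (int p) (int q) (i+1) j) = (1 - lam) * (real p + real q)"
    "real_of_int (Sg (int p) (int q) i (j+1)) = - (lam * (real p + real q))"
    if "real_of_int i + lam = s * real q" "real_of_int j + 1 - lam = s * real p" for lam
  proof -
    note a = that
    have i: "real_of_int i = s * real q - lam" and j: "real_of_int j = s * real p - 1 + lam" using a by simp_all
    show "real_of_int (Sg (int p) (int q) (i+1) j) = (1 - lam) * (real p + real q)"
      unfolding Sg_real by (simp add: i j algebra_simps)
    show "real_of_int (Sg (int p) (int q) i (j+1)) = - (lam * (real p + real q))"
      unfolding Sg_real by (simp add: i j algebra_simps)
  qed
  show ?thesis
  proof
    assume "crosses_at p q (Dia i j) s"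
    then obtain lam where s0: "0 \<le> s" "s \<le> 1" and l: "0 < lam" "lam < 1"
      and e1: "real_of_int i + lam = s * real q" and e2: "real_of_int j + 1 - lam = s * real p"
      unfolding crosses_at_def by auto
    have ek: "real_of_int (i+j+1) = s * (real p + real q)" using e1 e2 by (simp add: algebra_simps)
    have sv: "s = Pn (int p) (int q) (Dia i j)" using ek pr by (simp add: field_simps)
    have "real_of_int (Sg (int p) (int q) i (j+1)) < 0" using key(2)[OF e1 e2] l pr by simp
    moreover have "0 < real_of_int (Sg (int p) (int q) (i+1) j)" using key(1)[OF e1 e2] l pr by simp
    moreover have "0 \<le> real_of_int (i+j+1)" using ek s0 pr by simp
    then have "0 \<le> i+j+1" by linarith
    moreover have "real_of_int (i+j+1) \<le> real p + real q" using ek s0 pr by (simp add: mult_le_cancel_right1)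
    then have "i+j+1 \<le> int p + int q" by linarith
    ultimately show "crossI (int p) (int q) (Dia i j) \<and> s = Pn (int p) (int q) (Dia i j)"
      using cI sv by simp
  next
    assume h: "crossI (int p) (int q) (Dia i j) \<and> s = Pn (int p) (int q) (Dia i j)"
    then have sv: "s = real_of_int (i+j+1) / (real p + real q)" by simp
    have ek: "real_of_int (i+j+1) = s * (real p + real q)" using sv pr by simp
    have h2: "0 \<le> i+j+1" "i+j+1 \<le> int p + int q" "Sg (int p) (int q) (i+1) j > 0" "Sg (int p) (int q) i (j+1) < 0" using h cI by auto
    define lam where "lam = s * real q - real_of_int i"
    have e1: "real_of_int i + lam = s * real q" by (simp add: lam_def)
    have e2: "real_of_int j + 1 - lam = s * real p" using ek by (simp add: lam_def algebra_simps)
    have "real_of_int (Sg (int p) (int q) i (j+1)) < 0" using h2(4) by simp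
    then have "0 < lam * (real p + real q)" using key(2)[OF e1 e2] by simp
    then have "0 < lam" using pr by (simp add: zero_less_mult_iff)
    moreover have "0 < real_of_int (Sg (int p) (int q) (i+1) j)" using h2(3) by simp
    then have "0 < (1 - lam) * (real p + real q)" using key(1)[OF e1 e2] by simp
    then have "lam < 1" using pr by (simp add: zero_less_mult_iff)
    moreover have "0 \<le> real_of_int (i+j+1)" using h2(1) by linarith
    then have "0 \<le> s" using sv pr by simp
    moreover have "real_of_int (i+j+1) \<le> real p + real q" using h2(2) by linarith
    then have "s \<le> 1" using sv pr by simp
    moreover have "fst (edge_start (Dia i j)) + lam * (fst (edge_end (Dia i j)) - fst (edge_start (Dia i j))) = s * real q"
      using e1 by simp
    moreover have "snd (edge_start (Dia i j)) + lam * (snd (edge_end (Dia i j)) - snd (edge_start (Dia i j))) = s * real p"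
      using e2 by simp
    ultimately show "crosses_at p q (Dia i j) s" unfolding crosses_at_def by blast
  qed
qed

lemma crosses_iff:
  fixes p q :: nat assumes p: "0 < p" and q: "0 < q"
  shows "crosses_at p q e s \<longleftrightarrow> crossI (int p) (int q) e \<and> s = Pn (int p) (int q) e"
  using crosses_Ver[OF p q] crosses_Hor[OF p q] crosses_Dia[OF p q] by (cases e) auto

lemma crossing_edges_eq:
  fixes p q :: nat assumes p: "0 < p" and q: "0 < q"
  shows "crossing_edges p q = {e. crossI (int p) (int q) e}"
  unfolding crossing_edges_def using crosses_iff[OF p q] by auto

lemma cross_param_eq:
  fixes p q :: nat assumes p: "0 < p" and q: "0 < q" and c: "crossI (int p) (int q) e"
  shows "cross_param p q e = Pn (int p) (int q) e"
  unfolding cross_param_def using crosses_iff[OF p q] c by auto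

definition enum :: "int \<Rightarrow> int \<Rightarrow> edge list \<Rightarrow> bool" where
  "enum p q es \<longleftrightarrow> distinct es \<and> set es = {e. crossI p q e} \<and> sorted (map (Pn p q) es)"

lemma frac_eq_int:
  assumes "0 < (q::int)" "0 < (p::int)"
  shows "(real_of_int a / real_of_int q = real_of_int b / real_of_int p) \<longleftrightarrow> a*p = b*q"
proof -
  have "(real_of_int a / real_of_int q = real_of_int b / real_of_int p) \<longleftrightarrow> real_of_int a * real_of_int p = real_of_int b * real_of_int q"
    using assms by (simp add: frac_eq_eq)
  also have "\<dots> \<longleftrightarrow> real_of_int (a*p) = real_of_int (b*q)" by simp
  also have "\<dots> \<longleftrightarrow> a*p = b*q" by (rule of_int_eq_iff)
  finally show ?thesis .
qed

lemma frac_less_int: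
  assumes "0 < (q::int)" "0 < (p::int)"
  shows "(real_of_int a / real_of_int q < real_of_int b / real_of_int p) \<longleftrightarrow> a*p < b*q"
proof -
  have "(real_of_int a / real_of_int q < real_of_int b / real_of_int p) \<longleftrightarrow> real_of_int a * real_of_int p < real_of_int b * real_of_int q"
  proof -
    have "0 < real_of_int q" "0 < real_of_int p" using assms by simp_all
    then show ?thesis by (simp add: field_simps)
  qed
  also have "\<dots> \<longleftrightarrow> real_of_int (a*p) < real_of_int (b*q)" by simp
  also have "\<dots> \<longleftrightarrow> a*p < b*q" by (rule of_int_less_iff)
  finally show ?thesis .
qed

lemma no_between: "0 < (q::int) \<Longrightarrow> j*q < x*q \<Longrightarrow> x*q < (j+1)*q \<Longrightarrow> False"
  by (metis canc_lt add1_zle_eq not_less)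

lemma le_between: "0 < (q::int) \<Longrightarrow> j*q < xx \<Longrightarrow> xx < (j'+1)*q \<Longrightarrow> j \<le> j'"
proof -
  assume q: "0 < q" and a: "j*q < xx" "xx < (j'+1)*q"
  then have "j*q < (j'+1)*q" by linarith
  then have "j < j'+1" using canc_lt[OF q] by blast
  then show ?thesis by linarith
qed

lemma Pn_inj:
  assumes p: "0 < p" and q: "0 < q" and c: "crossI p q e" "crossI p q e'" and eq: "Pn p q e = Pn p q e'"
  shows "e = e'"
proof (cases e)
  case (Ver i j)
  note e = Ver
  show ?thesis
  proof (cases e')
    case (Ver i' j')
    have "real_of_int i / real_of_int q = real_of_int i' / real_of_int q" using eq e Ver by simp
    then have ii: "i = i'" using q by simp
    have a: "j*q < i*p" "i*p < (j+1)*q" "j'*q < i*p" "i*p < (j'+1)*q" using c e Ver ii by (auto simp: Sg_def)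
    have "j \<le> j'" using le_between[OF q a(1) a(4)] .
    moreover have "j' \<le> j" using le_between[OF q a(3) a(2)] .
    ultimately show ?thesis using e Ver ii by simp
  next
    case (Hor i' j')
    have "i*p = j'*q" using eq e Hor frac_eq_int[OF q p] by simp
    moreover have a: "j*q < i*p" "i*p < (j+1)*q" using c e by (auto simp: Sg_def)
    ultimately show ?thesis using no_between[OF q] by metis
  next
    case (Dia i' j')
    have "real_of_int i / real_of_int q = real_of_int (i'+j'+1) / real_of_int (p+q)" using eq e Dia by simp
    then have "i*(p+q) = (i'+j'+1)*q" using frac_eq_int[of q "p+q" i "i'+j'+1"] p q by simp
    then have "i*p = (i'+j'+1-i)*q" by (simp add: algebra_simps)
    moreover have a: "j*q < i*p" "i*p < (j+1)*q" using c e by (auto simp: Sg_def)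
    ultimately show ?thesis using no_between[OF q] by metis
  qed
next
  case (Hor i j)
  note e = Hor
  show ?thesis
  proof (cases e')
    case (Ver i' j')
    have "i'*p = j*q" using eq e Ver frac_eq_int[OF q p, of i' j] by (simp add: eq_commute)
    moreover have a: "j'*q < i'*p" "i'*p < (j'+1)*q" using c Ver by (auto simp: Sg_def)
    ultimately show ?thesis using no_between[OF q] by metis
  next
    case (Hor i' j')
    have "real_of_int j / real_of_int p = real_of_int j' / real_of_int p" using eq e Hor by simp
    then have jj: "j = j'" using p by simp
    have a: "i*p < j*q" "j*q < (i+1)*p" "i'*p < j*q" "j*q < (i'+1)*p" using c e Hor jj by (auto simp: Sg_def)
    have "i \<le> i'" using le_between[OF p a(1) a(4)] .
    moreover have "i' \<le> i" using le_between[OF p a(3) a(2)] .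
    ultimately show ?thesis using e Hor jj by simp
  next
    case (Dia i' j')
    have "real_of_int j / real_of_int p = real_of_int (i'+j'+1) / real_of_int (p+q)" using eq e Dia by simp
    then have "j*(p+q) = (i'+j'+1)*p" using frac_eq_int[of p "p+q" j "i'+j'+1"] p q by simp
    then have "j*q = (i'+j'+1-j)*p" by (simp add: algebra_simps)
    moreover have a: "i*p < j*q" "j*q < (i+1)*p" using c e by (auto simp: Sg_def)
    ultimately show ?thesis using no_between[OF p] by metis
  qed
next
  case (Dia i j)
  note e = Dia
  show ?thesis
  proof (cases e')
    case (Ver i' j')
    have "real_of_int i' / real_of_int q = real_of_int (i+j+1) / real_of_int (p+q)" using eq e Ver by simp
    then have "i'*(p+q) = (i+j+1)*q" using frac_eq_int[of q "p+q" i' "i+j+1"] p q by simp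
    then have "i'*p = (i+j+1-i')*q" by (simp add: algebra_simps)
    moreover have a: "j'*q < i'*p" "i'*p < (j'+1)*q" using c Ver by (auto simp: Sg_def)
    ultimately show ?thesis using no_between[OF q] by metis
  next
    case (Hor i' j')
    have "real_of_int j' / real_of_int p = real_of_int (i+j+1) / real_of_int (p+q)" using eq e Hor by simp
    then have "j'*(p+q) = (i+j+1)*p" using frac_eq_int[of p "p+q" j' "i+j+1"] p q by simp
    then have "j'*q = (i+j+1-j')*p" by (simp add: algebra_simps)
    moreover have a: "i'*p < j'*q" "j'*q < (i'+1)*p" using c Hor by (auto simp: Sg_def)
    ultimately show ?thesis using no_between[OF p] by metis
  next
    case (Dia i' j')
    have "real_of_int (i+j+1) / real_of_int (p+q) = real_of_int (i'+j'+1) / real_of_int (p+q)" using eq e Dia by simp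
    then have kk: "i+j = i'+j'" using p q by simp
    have a: "j*q < (i+1)*p" "i*p < (j+1)*q" "j'*q < (i'+1)*p" "i'*p < (j'+1)*q"
      using c e Dia by (auto simp: Sg_def)
    have "\<not> i < i'"
    proof
      assume "i < i'"
      then have "j'+1 \<le> j" "i+1 \<le> i'" using kk by auto
      then have "(j'+1)*q \<le> j*q" "(i+1)*p \<le> i'*p" using p q by (auto intro: mult_right_mono)
      then show False using a by linarith
    qed
    moreover have "\<not> i' < i"
    proof
      assume "i' < i"
      then have "j+1 \<le> j'" "i'+1 \<le> i" using kk by auto
      then have "(j+1)*q \<le> j'*q" "(i'+1)*p \<le> i*p" using p q by (auto intro: mult_right_mono)
      then show False using a by linarith
    qed
    ultimately show ?thesis using e Dia kk by simp
  qed
qed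

lemma sorted_unique:
  assumes "distinct xs" "distinct ys" "set xs = set ys" "sorted (map f xs)" "sorted (map f ys)"
    "inj_on f (set xs)"
  shows "xs = ys"
proof -
  have "map f xs = map f ys"
    using assms by (intro sorted_distinct_set_unique) (auto simp: distinct_map)
  then show ?thesis using assms(3,6) inj_on_map_eq_map[of f xs ys] by simp
qed

lemma omega_geom_eq:
  fixes p q :: nat
  assumes p: "0 < p" and q: "0 < q" and en: "enum (int p) (int q) es"
  shows "omega_geom p q = map (edge_letter p q) es"
proof -
  have ce: "crossing_edges p q = {e. crossI (int p) (int q) e}" using crossing_edges_eq[OF p q] .
  have cp: "map (cross_param p q) xs = map (Pn (int p) (int q)) xs" if "set xs \<subseteq> {e. crossI (int p) (int q) e}" for xs
    using that cross_param_eq[OF p q] by (auto intro: map_cong)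
  have inj: "inj_on (Pn (int p) (int q)) {e. crossI (int p) (int q) e}"
    using Pn_inj[of "int p" "int q"] p q by (auto simp: inj_on_def)
  show ?thesis unfolding omega_geom_def
  proof (rule the_equality)
    show "\<exists>es'. distinct es' \<and> set es' = crossing_edges p q \<and> sorted (map (cross_param p q) es') \<and>
      map (edge_letter p q) es = map (edge_letter p q) es'"
    proof (intro exI[of _ es] conjI)
      have "set es \<subseteq> {e. crossI (int p) (int q) e}" using en unfolding enum_def by simp
      then have "map (cross_param p q) es = map (Pn (int p) (int q)) es" by (rule cp)
      note eq = this
      have "sorted (map (Pn (int p) (int q)) es)" using en unfolding enum_def by simp
      then show "sorted (map (cross_param p q) es)" by (simp only: eq)
    qed (use en ce in \<open>auto simp: enum_def\<close>)
  next
    fix ws assume "\<exists>es'. distinct es' \<and> set es' = crossing_edges p q \<and> sorted (map (cross_param p q) es') \<and>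
      ws = map (edge_letter p q) es'"
    then obtain es' where h: "distinct es'" "set es' = crossing_edges p q" "sorted (map (cross_param p q) es')"
      "ws = map (edge_letter p q) es'" by blast
    have "sorted (map (Pn (int p) (int q)) es')" using h(2,3) ce cp[of es'] by simp
    then have "es' = es" using h en ce inj unfolding enum_def
      by (intro sorted_unique[where f = "Pn (int p) (int q)"]) auto
    then show "ws = map (edge_letter p q) es" using h by simp
  qed
qed

lemma jb1: "0 < (q::int) \<Longrightarrow> j*q < xx \<Longrightarrow> xx \<le> p*q \<Longrightarrow> j < p"
  by (metis canc_lt order_less_le_trans)
lemma jb2: "0 < (q::int) \<Longrightarrow> xx < (j+1)*q \<Longrightarrow> 0 \<le> xx \<Longrightarrow> 0 \<le> j"
  by (smt (verit) mult_less_0_iff mult_nonneg_nonneg zero_less_mult_iff)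

lemma crossI_bounds:
  assumes p: "0 \<le> p" and c: "crossI p q e"
  shows "e \<in> (\<lambda>(i,j). Ver i j) ` ({0..q}\<times>{0..p}) \<union> (\<lambda>(i,j). Hor i j) ` ({0..q}\<times>{0..p})
           \<union> (\<lambda>(i,j). Dia i j) ` ({0..q}\<times>{0..p})"
proof (cases e)
  case (Ver i j)
  then have h: "0 < i" "i < q" "j*q < i*p" "i*p < (j+1)*q" using c by (auto simp: Sg_def)
  have "i*p \<le> q*p" using h p by (intro mult_right_mono) auto
  then have "j < p" using jb1[of q j "i*p" p] h by (simp add: mult.commute)
  moreover have "0 \<le> j" using jb2[of q "i*p" j] h p by simp
  ultimately show ?thesis using Ver h by auto
next
  case (Hor i j)
  then have h: "0 \<le> i" "i < q" "i*p < j*q" "j*q < (i+1)*p" using c by (auto simp: Sg_def)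
  have "0 \<le> i*p" using h p by simp
  then have "0 < j*q" using h by linarith
  then have "0 \<le> j" using h by (simp add: zero_less_mult_iff)
  moreover have "(i+1)*p \<le> q*p" using h p by (intro mult_right_mono) auto
  then have "j*q < q*p" using h by linarith
  then have "j*q < p*q" by (simp add: mult.commute)
  then have "j \<le> p" using canc_lt[of q j p] h by simp
  ultimately show ?thesis using Hor h by auto
next
  case (Dia i j)
  then have h: "0 \<le> i" "i < q" "j*q < (i+1)*p" "i*p < (j+1)*q" using c by (auto simp: Sg_def)
  have "(i+1)*p \<le> q*p" using h p by (intro mult_right_mono) auto
  then have "j < p" using jb1[of q j "(i+1)*p" p] h by (simp add: mult.commute)
  moreover have "0 \<le> j" using jb2[of q "i*p" j] h p by simp
  ultimately show ?thesis using Dia h by auto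
qed

lemma enum_exists:
  assumes "0 \<le> p"
  shows "\<exists>es. enum p q es"
proof -
  let ?F = "(\<lambda>(i,j). Ver i j) ` ({0..q}\<times>{0..p}) \<union> (\<lambda>(i,j). Hor i j) ` ({0..q}\<times>{0..p})
           \<union> (\<lambda>(i,j). Dia i j) ` ({0..q}\<times>{0..p})"
  have "finite ?F" by simp
  moreover have "{e. crossI p q e} \<subseteq> ?F" using crossI_bounds[OF assms] by blast
  ultimately have "finite {e. crossI p q e}" by (rule finite_subset[rotated])
  then obtain xs where xs: "set xs = {e. crossI p q e}" "distinct xs"
    using finite_distinct_list by blast
  have "enum p q (sort_key (Pn p q) xs)"
    unfolding enum_def using xs by (simp add: distinct_sort)
  then show ?thesis by blast
qed

fun rfl :: "int \<Rightarrow> int \<Rightarrow> edge \<Rightarrow> edge" where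
  "rfl p q (Ver i j) = Ver (q-i) (p-1-j)"
| "rfl p q (Hor i j) = Hor (q-1-i) (p-j)"
| "rfl p q (Dia i j) = Dia (q-1-i) (p-1-j)"

lemma rfl_rfl [simp]: "rfl p q (rfl p q e) = e"
  by (cases e) auto

lemma rfl_cross: "crossI p q e \<Longrightarrow> crossI p q (rfl p q e)"
  by (cases e) (auto simp: Sg_def algebra_simps)

lemma Pn_rfl:
  assumes "0 < p" "0 < q"
  shows "Pn p q (rfl p q e) = 1 - Pn p q e"
proof -
  have "real_of_int q \<noteq> 0" "real_of_int p \<noteq> 0" "real_of_int p + real_of_int q \<noteq> 0" using assms by auto
  then show ?thesis by (cases e) (auto simp: field_simps)
qed

lemma len_AB:
  assumes p: "0 < p" and q: "0 < q" and en: "enum p q es"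
  shows "length (filter (\<lambda>e. Pn p q e < 1/2) es) = length (filter (\<lambda>e. Pn p q e > 1/2) es)"
proof -
  have d: "distinct es" and s: "set es = {e. crossI p q e}" using en by (auto simp: enum_def)
  let ?A = "{e. crossI p q e \<and> Pn p q e < 1/2}"
  let ?B = "{e. crossI p q e \<and> Pn p q e > 1/2}"
  have "length (filter (\<lambda>e. Pn p q e < 1/2) es) = card ?A"
    using d s by (simp add: distinct_card[symmetric])
  moreover have "length (filter (\<lambda>e. Pn p q e > 1/2) es) = card ?B"
    using d s by (simp add: distinct_card[symmetric])
  moreover have seq: "rfl p q ` ?B = ?A"
  proof
    show "rfl p q ` ?B \<subseteq> ?A" using Pn_rfl[OF p q] rfl_cross by auto
    show "?A \<subseteq> rfl p q ` ?B"
    proof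
      fix e assume "e \<in> ?A"
      then have "rfl p q e \<in> ?B" using Pn_rfl[OF p q] rfl_cross by auto
      then show "e \<in> rfl p q ` ?B" by (metis rfl_rfl image_eqI)
    qed
  qed
  moreover have inj: "inj_on (rfl p q) ?B" by (metis inj_onI rfl_rfl)
  have "card (rfl p q ` ?B) = card ?B" by (rule card_image[OF inj])
  ultimately show ?thesis by simp
qed

lemma sorted_split3:
  fixes f :: "'a \<Rightarrow> real"
  shows "sorted (map f xs) \<Longrightarrow> xs = filter (\<lambda>x. f x < c) xs @ filter (\<lambda>x. f x = c) xs @ filter (\<lambda>x. f x > c) xs"
proof (induction xs)
  case Nil
  then show ?case by simp
next
  case (Cons x xs)
  have m: "\<forall>y\<in>set xs. f x \<le> f y" and s: "sorted (map f xs)" using Cons.prems by auto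
  note IH = Cons.IH[OF s]
  consider "f x < c" | "f x = c" | "f x > c" by linarith
  then show ?case
  proof cases
    case 1
    then show ?thesis using IH by simp
  next
    case 2
    then have "filter (\<lambda>y. f y < c) xs = []" using m by (auto simp: filter_empty_conv)
    then show ?thesis using IH 2 by simp
  next
    case 3
    then have "filter (\<lambda>y. f y < c) xs = []" "filter (\<lambda>y. f y = c) xs = []"
      using m by (auto simp: filter_empty_conv)
    moreover have "filter (\<lambda>y. f y > c) xs = xs" by (rule filter_True) (use m 3 in auto)
    ultimately show ?thesis using 3 by simp
  qed
qed

lemma length_inv_word [simp]: "length (inv_word u) = length u"
  by (simp add: inv_word_def)

lemma flip_word:
  assumes p: "0 < p" and q: "0 < q" and en: "enum p q es"
    and w: "map L es = u @ [\<beta>] @ inv_word u"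
    and g1: "\<And>e. e \<in> set es \<Longrightarrow> Pn p q e \<noteq> 1/2 \<Longrightarrow> g e = L e"
    and g2: "\<And>e. e \<in> set es \<Longrightarrow> Pn p q e = 1/2 \<Longrightarrow> g e = inv_letter (L e)"
  shows "map g es = u @ [inv_letter \<beta>] @ inv_word u"
proof -
  define A where "A = filter (\<lambda>e. Pn p q e < 1/2) es"
  define C where "C = filter (\<lambda>e. Pn p q e = 1/2) es"
  define B where "B = filter (\<lambda>e. Pn p q e > 1/2) es"
  have d: "distinct es" and s: "set es = {e. crossI p q e}" and so: "sorted (map (Pn p q) es)"
    using en by (auto simp: enum_def)
  have split: "es = A @ C @ B" unfolding A_def B_def C_def by (rule sorted_split3[OF so])
  have lAB: "length A = length B" unfolding A_def B_def by (rule len_AB[OF p q en])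
  have "card (set C) \<le> Suc 0"
  proof -
    have "\<forall>x\<in>set C. \<forall>y\<in>set C. x = y"
      using s Pn_inj[OF p q] unfolding C_def by auto
    then show ?thesis by (simp add: card_le_Suc0_iff_eq)
  qed
  moreover have "distinct C" using d unfolding C_def by simp
  ultimately have lC: "length C \<le> 1" by (simp add: distinct_card)
  have "length (map L es) = 2 * length u + 1" using w by simp
  then have "length A + length C + length B = 2 * length u + 1" using split
    by (metis length_append length_map add.assoc)
  then have lens: "length C = 1" "length A = length u" using lAB lC by presburger+
  then obtain m where Cm: "C = [m]" by (metis One_nat_def length_0_conv length_Suc_conv)
  have "map L A @ [L m] @ map L B = u @ [\<beta>] @ inv_word u" using w split Cm by simp
  then have LA: "map L A = u" and Lm: "L m = \<beta>" and LB: "map L B = inv_word u"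
    using lens by (auto simp: append_eq_append_conv)
  have "map g A = map L A"
    using g1 split unfolding A_def by (intro map_cong) auto
  moreover have "map g B = map L B"
    using g1 split unfolding B_def by (intro map_cong) auto
  moreover have "g m = inv_letter (L m)"
  proof -
    have "m \<in> set C" using Cm by simp
    then have "m \<in> set es" "Pn p q m = 1/2" unfolding C_def by auto
    then show ?thesis by (rule g2)
  qed
  ultimately show ?thesis using split Cm LA Lm LB by simp
qed

context
  fixes a b c d U V al g :: int
  assumes a0: "a \<ge> 0" and b1: "b \<ge> 1" and c1: "c \<ge> 1" and d0: "d \<ge> 0"
    and U: "U = b*g - d*al" and V: "V = a*g - c*al"
begin

lemma GU1: "g \<ge> n \<Longrightarrow> al \<le> -m \<Longrightarrow> U \<ge> n*b + m*d"
proof -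
  assume h: "g \<ge> n" "al \<le> -m"
  have "b*n \<le> b*g" using h b1 by (intro mult_left_mono) auto
  moreover have "d*m \<le> d*(-al)" using h d0 by (intro mult_left_mono) auto
  ultimately show ?thesis using U by (simp add: algebra_simps)
qed

lemma GU2: "g \<le> -n \<Longrightarrow> al \<ge> m \<Longrightarrow> U \<le> -(n*b) - m*d"
proof -
  assume h: "g \<le> -n" "al \<ge> m"
  have "b*g \<le> b*(-n)" using h b1 by (intro mult_left_mono) auto
  moreover have "d*m \<le> d*al" using h d0 by (intro mult_left_mono) auto
  ultimately show ?thesis using U by (simp add: algebra_simps)
qed

lemma GV1: "g \<ge> n \<Longrightarrow> al \<le> -m \<Longrightarrow> V \<ge> n*a + m*c"
proof -
  assume h: "g \<ge> n" "al \<le> -m"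
  have "a*n \<le> a*g" using h a0 by (intro mult_left_mono) auto
  moreover have "c*m \<le> c*(-al)" using h c1 by (intro mult_left_mono) auto
  ultimately show ?thesis using V by (simp add: algebra_simps)
qed

lemma GV2: "g \<le> -n \<Longrightarrow> al \<ge> m \<Longrightarrow> V \<le> -(n*a) - m*c"
proof -
  assume h: "g \<le> -n" "al \<ge> m"
  have "a*g \<le> a*(-n)" using h a0 by (intro mult_left_mono) auto
  moreover have "c*m \<le> c*al" using h c1 by (intro mult_left_mono) auto
  ultimately show ?thesis using V by (simp add: algebra_simps)
qed

lemma AR_pos:
  assumes "0 \<le> U" "U \<le> b" "\<not> (U = b \<and> V = a)"
  shows "al > 0 \<longleftrightarrow> al + g > 0"
proof
  assume "al > 0"
  show "al + g > 0"
  proof (rule ccontr)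
    assume "\<not> al + g > 0"
    then have "U \<le> -(1*b) - 1*d" using GU2[of 1 1] \<open>al > 0\<close> by linarith
    then show False using assms b1 d0 by linarith
  qed
next
  assume h: "al + g > 0"
  show "al > 0"
  proof (rule ccontr)
    assume n: "\<not> al > 0"
    consider "al = 0" "g = 1" | "al = 0" "g \<ge> 2" | "al \<le> -1" "g \<ge> 2" using h n by linarith
    then show False
    proof cases
      case 1 then show False using U V assms by simp
    next
      case 2 then have "U \<ge> 2*b + 0*d" using GU1[of 2 0] by simp
      then show False using assms b1 by linarith
    next
      case 3 then have "U \<ge> 2*b + 1*d" using GU1[of 2 1] by simp
      then show False using assms b1 d0 by linarith
    qed
  qed
qed

lemma AR_neg:
  assumes "0 \<le> U" "U \<le> b - 1"
  shows "al < 0 \<longleftrightarrow> al + g < 0"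
proof
  assume h: "al < 0"
  show "al + g < 0"
  proof (rule ccontr)
    assume "\<not> al + g < 0"
    then have "U \<ge> 1*b + 1*d" using GU1[of 1 1] h by linarith
    then show False using assms b1 d0 by linarith
  qed
next
  assume h: "al + g < 0"
  show "al < 0"
  proof (rule ccontr)
    assume "\<not> al < 0"
    then have "U \<le> -(1*b) - 0*d" using GU2[of 1 0] h by linarith
    then show False using assms b1 by linarith
  qed
qed

lemma AR_V:
  assumes "0 \<le> V" "V \<le> a - 1"
  shows "(al > 0 \<longleftrightarrow> al + g > 0) \<and> (al < 0 \<longleftrightarrow> al + g < 0)"
proof (intro conjI iffI)
  assume h: "al > 0"
  show "al + g > 0"
  proof (rule ccontr)
    assume "\<not> al + g > 0"
    then have "V \<le> -(1*a) - 1*c" using GV2[of 1 1] h by linarith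
    then show False using assms a0 c1 by linarith
  qed
next
  assume h: "al + g > 0"
  show "al > 0"
  proof (rule ccontr)
    assume n: "\<not> al > 0"
    consider "al = 0" "g \<ge> 1" | "al \<le> -1" "g \<ge> 2" using h n by linarith
    then show False
    proof cases
      case 1 then have "V \<ge> 1*a + 0*c" using GV1[of 1 0] by simp
      then show False using assms by linarith
    next
      case 2 then have "V \<ge> 2*a + 1*c" using GV1[of 2 1] by simp
      then show False using assms a0 c1 by linarith
    qed
  qed
next
  assume h: "al < 0"
  show "al + g < 0"
  proof (rule ccontr)
    assume "\<not> al + g < 0"
    then have "V \<ge> 1*a + 1*c" using GV1[of 1 1] h by linarith
    then show False using assms a0 c1 by linarith
  qed
next
  assume h: "al + g < 0"
  show "al < 0"
  proof (rule ccontr)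
    assume "\<not> al < 0"
    then have "V \<le> -(1*a) - 0*c" using GV2[of 1 0] h by linarith
    then show False using assms by linarith
  qed
qed

lemma AS_neg:
  assumes "0 \<le> U" "U \<le> d" "d \<ge> 1"
  shows "g < 0 \<longleftrightarrow> al + g + 1 < 0"
proof
  assume h: "g < 0"
  show "al + g + 1 < 0"
  proof (rule ccontr)
    assume "\<not> al + g + 1 < 0"
    then have "U \<le> -(1*b) - 0*d" using GU2[of 1 0] h by linarith
    then show False using assms b1 by linarith
  qed
next
  assume h: "al + g + 1 < 0"
  show "g < 0"
  proof (rule ccontr)
    assume "\<not> g < 0"
    then have "U \<ge> 0*b + 2*d" using GU1[of 0 2] h by linarith
    then show False using assms by linarith
  qed
qed

lemma AS_pos:
  assumes "1 \<le> U" "U \<le> d"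
  shows "g > 0 \<longleftrightarrow> al + g + 1 > 0"
proof
  assume h: "g > 0"
  show "al + g + 1 > 0"
  proof (rule ccontr)
    assume "\<not> al + g + 1 > 0"
    then have "U \<ge> 1*b + 2*d" using GU1[of 1 2] h by linarith
    then show False using assms b1 d0 by linarith
  qed
next
  assume h: "al + g + 1 > 0"
  show "g > 0"
  proof (rule ccontr)
    assume "\<not> g > 0"
    then have "U \<le> -(0*b) - 0*d" using GU2[of 0 0] h by linarith
    then show False using assms by linarith
  qed
qed

lemma AS_V:
  assumes "1 \<le> V" "V \<le> c - 1"
  shows "(g > 0 \<longleftrightarrow> al + g + 1 > 0) \<and> (g < 0 \<longleftrightarrow> al + g + 1 < 0)"
proof (intro conjI iffI)
  assume h: "g > 0"
  show "al + g + 1 > 0"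
  proof (rule ccontr)
    assume "\<not> al + g + 1 > 0"
    then have "V \<ge> 1*a + 2*c" using GV1[of 1 2] h by linarith
    then show False using assms a0 c1 by linarith
  qed
next
  assume h: "al + g + 1 > 0"
  show "g > 0"
  proof (rule ccontr)
    assume "\<not> g > 0"
    then have "V \<le> -(0*a) - 0*c" using GV2[of 0 0] h by linarith
    then show False using assms by linarith
  qed
next
  assume h: "g < 0"
  show "al + g + 1 < 0"
  proof (rule ccontr)
    assume "\<not> al + g + 1 < 0"
    then have "V \<le> -(1*a) - 0*c" using GV2[of 1 0] h by linarith
    then show False using assms a0 by linarith
  qed
next
  assume h: "al + g + 1 < 0"
  show "g < 0"
  proof (rule ccontr)
    assume "\<not> g < 0"
    then have "V \<ge> 0*a + 2*c" using GV1[of 0 2] h by linarith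
    then show False using assms by linarith
  qed
qed

lemma AL_R:
  assumes "1 \<le> U" "U \<le> 2*b - 1" "\<not> (U = b \<and> V = a)"
  shows "al \<le> 0 \<longleftrightarrow> al + g \<le> 0"
proof
  assume h: "al \<le> 0"
  show "al + g \<le> 0"
  proof (rule ccontr)
    assume n: "\<not> al + g \<le> 0"
    consider "al = 0" "g = 1" | "al = 0" "g \<ge> 2" | "al \<le> -1" "g \<ge> 2" using h n by linarith
    then show False
    proof cases
      case 1 then show False using U V assms by simp
    next
      case 2 then have "U \<ge> 2*b + 0*d" using GU1[of 2 0] by simp
      then show False using assms b1 by linarith
    next
      case 3 then have "U \<ge> 2*b + 1*d" using GU1[of 2 1] by simp
      then show False using assms b1 d0 by linarith
    qed
  qed
next
  assume h: "al + g \<le> 0"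
  show "al \<le> 0"
  proof (rule ccontr)
    assume "\<not> al \<le> 0"
    then have "U \<le> -(1*b) - 1*d" using GU2[of 1 1] h by linarith
    then show False using assms b1 d0 by linarith
  qed
qed

lemma AL_S:
  assumes "1 \<le> U" "U \<le> 2*d - 1" "\<not> (U = d \<and> V = c)"
  shows "g \<le> 0 \<longleftrightarrow> al + g + 2 \<le> 0"
proof
  assume h: "g \<le> 0"
  show "al + g + 2 \<le> 0"
  proof (rule ccontr)
    assume n: "\<not> al + g + 2 \<le> 0"
    consider "g = 0" "al = -1" | "g = 0" "al \<ge> 0" | "g \<le> -1" "al \<ge> 0" using h n by linarith
    then show False
    proof cases
      case 1 then show False using U V assms by simp
    next
      case 2 then have "U \<le> -(0*b) - 0*d" using GU2[of 0 0] by simp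
      then show False using assms by linarith
    next
      case 3 then have "U \<le> -(1*b) - 0*d" using GU2[of 1 0] by simp
      then show False using assms b1 by linarith
    qed
  qed
next
  assume h: "al + g + 2 \<le> 0"
  show "g \<le> 0"
  proof (rule ccontr)
    assume "\<not> g \<le> 0"
    then have "U \<ge> 1*b + 3*d" using GU1[of 1 3] h by linarith
    then show False using assms b1 d0 by linarith
  qed
qed

end

definition farey :: "int \<Rightarrow> int \<Rightarrow> int \<Rightarrow> int \<Rightarrow> bool" where
  "farey a b c d \<longleftrightarrow> 0 \<le> a \<and> 1 \<le> b \<and> 1 \<le> c \<and> 0 \<le> d \<and> b*c = a*d + 1"

lemma Sg_add: "Sg (a+c) (b+d) U V = Sg a b U V + Sg c d U V"
  by (simp add: Sg_def algebra_simps)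

lemma Sg_ids:
  assumes "farey a b c d"
  shows "U = b * Sg c d U V - d * Sg a b U V" "V = a * Sg c d U V - c * Sg a b U V"
proof -
  have bc: "b*c - a*d = 1" using assms by (simp add: farey_def)
  have "b * Sg c d U V - d * Sg a b U V = U * (b*c - a*d)" by (simp add: Sg_def algebra_simps)
  then show "U = b * Sg c d U V - d * Sg a b U V" using bc by simp
  have "a * Sg c d U V - c * Sg a b U V = V * (b*c - a*d)" by (simp add: Sg_def algebra_simps)
  then show "V = a * Sg c d U V - c * Sg a b U V" using bc by simp
qed

lemma Sg_shift:
  assumes "farey a b c d" "U' = U + b" "V' = V + a"
  shows "Sg (a+c) (b+d) U' V' = Sg a b U V + Sg c d U V + 1"
proof -
  have bc: "b*c - a*d = 1" using assms by (simp add: farey_def)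
  have "Sg (a+c) (b+d) U' V' = Sg a b U V + Sg c d U V + (b*c - a*d)"
    using assms(2,3) by (simp add: Sg_def algebra_simps)
  then show ?thesis using bc by simp
qed

lemma Sg_shift2:
  assumes "farey a b c d" "U' = U + 2*b" "V' = V + 2*a"
  shows "Sg (a+c) (b+d) U' V' = Sg a b U V + Sg c d U V + 2"
proof -
  have bc: "b*c - a*d = 1" using assms by (simp add: farey_def)
  have "Sg (a+c) (b+d) U' V' = Sg a b U V + Sg c d U V + 2*(b*c - a*d)"
    using assms(2,3) by (simp add: Sg_def algebra_simps)
  then show ?thesis using bc by simp
qed

lemma Sg_tb:
  assumes "farey a b c d"
  shows "Sg (a+c) (b+d) b v = (a - v)*(b+d) + 1"
proof -
  have bc: "b*c - a*d = 1" using assms by (simp add: farey_def)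
  have "Sg (a+c) (b+d) b v = (a - v)*(b+d) + (b*c - a*d)" by (simp add: Sg_def algebra_simps)
  then show ?thesis using bc by simp
qed

lemma farey_d0: "farey a b c d \<Longrightarrow> d = 0 \<Longrightarrow> b = 1 \<and> c = 1"
proof -
  assume f: "farey a b c d" and d: "d = 0"
  then have h: "b*c = 1" "1 \<le> b" "1 \<le> c" by (auto simp: farey_def)
  show ?thesis using h pos_zmult_eq_1_iff[of b c] by auto
qed

lemma farey_a0: "farey a b c d \<Longrightarrow> a = 0 \<Longrightarrow> b = 1 \<and> c = 1"
proof -
  assume f: "farey a b c d" and a: "a = 0"
  then have h: "b*c = 1" "1 \<le> b" "1 \<le> c" by (auto simp: farey_def)
  show ?thesis using h pos_zmult_eq_1_iff[of b c] by auto
qed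

context
  fixes a b c d :: int
  assumes f: "farey a b c d"
begin

lemma fa: "0 \<le> a" "1 \<le> b" "1 \<le> c" "0 \<le> d" using f by (auto simp: farey_def)

lemma SR_pos: "0 \<le> U \<Longrightarrow> U \<le> b \<Longrightarrow> \<not> (U = b \<and> V = a) \<Longrightarrow> (Sg a b U V > 0 \<longleftrightarrow> Sg (a+c) (b+d) U V > 0)"
  unfolding Sg_add using AR_pos[OF fa Sg_ids[OF f]] by blast

lemma SR_neg: "0 \<le> U \<Longrightarrow> U \<le> b - 1 \<Longrightarrow> (Sg a b U V < 0 \<longleftrightarrow> Sg (a+c) (b+d) U V < 0)"
  unfolding Sg_add using AR_neg[OF fa Sg_ids[OF f]] by blast

lemma SR_V: "0 \<le> V \<Longrightarrow> V \<le> a - 1 \<Longrightarrow> (Sg a b U V > 0 \<longleftrightarrow> Sg (a+c) (b+d) U V > 0) \<and> (Sg a b U V < 0 \<longleftrightarrow> Sg (a+c) (b+d) U V < 0)"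
  unfolding Sg_add using AR_V[OF fa Sg_ids[OF f]] by blast

lemma SS_neg: "0 \<le> U \<Longrightarrow> U \<le> d \<Longrightarrow> 1 \<le> d \<Longrightarrow> U' = U + b \<Longrightarrow> V' = V + a \<Longrightarrow>
   (Sg c d U V < 0 \<longleftrightarrow> Sg (a+c) (b+d) U' V' < 0)"
  using Sg_shift[OF f] AS_neg[OF fa Sg_ids[OF f]] by auto

lemma SS_pos: "1 \<le> U \<Longrightarrow> U \<le> d \<Longrightarrow> U' = U + b \<Longrightarrow> V' = V + a \<Longrightarrow>
   (Sg c d U V > 0 \<longleftrightarrow> Sg (a+c) (b+d) U' V' > 0)"
  using Sg_shift[OF f] AS_pos[OF fa Sg_ids[OF f]] by auto

lemma SS_V: "1 \<le> V \<Longrightarrow> V \<le> c - 1 \<Longrightarrow> U' = U + b \<Longrightarrow> V' = V + a \<Longrightarrow>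
   (Sg c d U V > 0 \<longleftrightarrow> Sg (a+c) (b+d) U' V' > 0) \<and> (Sg c d U V < 0 \<longleftrightarrow> Sg (a+c) (b+d) U' V' < 0)"
  using Sg_shift[OF f] AS_V[OF fa Sg_ids[OF f]] by auto

lemma SL_R: "1 \<le> U \<Longrightarrow> U \<le> 2*b - 1 \<Longrightarrow> \<not> (U = b \<and> V = a) \<Longrightarrow> (Sg a b U V \<le> 0 \<longleftrightarrow> Sg (a+c) (b+d) U V \<le> 0)"
  unfolding Sg_add using AL_R[OF fa Sg_ids[OF f]] by blast

lemma SL_S: "1 \<le> U \<Longrightarrow> U \<le> 2*d - 1 \<Longrightarrow> \<not> (U = d \<and> V = c) \<Longrightarrow> U' = U + 2*b \<Longrightarrow> V' = V + 2*a \<Longrightarrow>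
   (Sg c d U V \<le> 0 \<longleftrightarrow> Sg (a+c) (b+d) U' V' \<le> 0)"
  using Sg_shift2[OF f] AL_S[OF fa Sg_ids[OF f]] by auto

end

lemma ver_b:
  assumes "0 \<le> p" "crossI p q (Ver i j)" shows "0 < i \<and> i < q \<and> 0 \<le> j \<and> j < p"
proof -
  have h: "0 < i" "i < q" "Sg p q i j > 0" using assms by auto
  have "j \<ge> 0 \<and> j \<le> p" using crossI_bounds[OF assms] by auto
  moreover have "j \<noteq> p"
  proof
    assume "j = p"
    then have "0 < p*(i - q)" using h by (simp add: Sg_def algebra_simps)
    moreover have "p*(i-q) \<le> 0" using h assms(1) by (intro mult_nonneg_nonpos) auto
    ultimately show False by simp
  qed
  ultimately show ?thesis using h by auto
qed

lemma hor_b: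
  assumes "0 \<le> p" "crossI p q (Hor i j)" shows "0 \<le> i \<and> i < q \<and> 0 < j \<and> j < p"
proof -
  have h: "0 \<le> i" "i < q" "Sg p q i j < 0" "Sg p q (i+1) j > 0" using assms by auto
  have "j \<ge> 0 \<and> j \<le> p" using crossI_bounds[OF assms] by auto
  moreover have "j \<noteq> p"
  proof
    assume "j = p"
    then have "0 < p*(i + 1 - q)" using h by (simp add: Sg_def algebra_simps)
    moreover have "p*(i + 1 - q) \<le> 0" using h assms(1) by (intro mult_nonneg_nonpos) auto
    ultimately show False by simp
  qed
  moreover have "j \<noteq> 0"
  proof
    assume "j = 0"
    then have "i*p < 0" using h by (simp add: Sg_def)
    moreover have "0 \<le> i*p" using h assms(1) by simp
    ultimately show False by simp
  qed
  ultimately show ?thesis using h by auto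
qed

lemma dia_b:
  assumes "0 \<le> p" "crossI p q (Dia i j)" shows "0 \<le> i \<and> i < q \<and> 0 \<le> j \<and> j < p"
proof -
  have h: "0 \<le> i" "i < q" "Sg p q (i+1) j > 0" using assms by auto
  have "j \<ge> 0 \<and> j \<le> p" using crossI_bounds[OF assms] by auto
  moreover have "j \<noteq> p"
  proof
    assume "j = p"
    then have "0 < p*(i + 1 - q)" using h by (simp add: Sg_def algebra_simps)
    moreover have "p*(i + 1 - q) \<le> 0" using h assms(1) by (intro mult_nonneg_nonpos) auto
    ultimately show False by simp
  qed
  ultimately show ?thesis using h by auto
qed

fun shE :: "int \<Rightarrow> int \<Rightarrow> edge \<Rightarrow> edge" where
  "shE b a (Ver i j) = Ver (i+b) (j+a)"
| "shE b a (Hor i j) = Hor (i+b) (j+a)"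
| "shE b a (Dia i j) = Dia (i+b) (j+a)"

definition Mlist :: "int \<Rightarrow> int \<Rightarrow> int \<Rightarrow> edge list" where
  "Mlist a b d = (if 0 < a then [Hor (b-1) a] else []) @ [Dia (b-1) a] @ (if 0 < d then [Ver b a] else [])"

context
  fixes a b c d :: int
  assumes f: "farey a b c d"
begin

lemma Sg_ba0: "Sg a b b a = 0" by (simp add: Sg_def algebra_simps)

lemma r_to_t: "crossI a b e \<Longrightarrow> crossI (a+c) (b+d) e"
proof (cases e)
  case (Ver i j)
  assume c: "crossI a b e"
  have h: "0 < i" "i < b" "Sg a b i j > 0" "Sg a b i (j+1) < 0" using c Ver by auto
  have "Sg (a+c) (b+d) i j > 0" using SR_pos[OF f, of i j] h by simp
  moreover have "Sg (a+c) (b+d) i (j+1) < 0" using SR_neg[OF f, of i "j+1"] h by simp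
  ultimately show ?thesis using Ver h fa[OF f] by simp
next
  case (Hor i j)
  assume c: "crossI a b e"
  have h: "0 \<le> i" "i < b" "Sg a b i j < 0" "Sg a b (i+1) j > 0" using c Hor by auto
  have ne: "\<not> (i+1 = b \<and> j = a)" using h(4) Sg_ba0 by auto
  have "Sg (a+c) (b+d) i j < 0" using SR_neg[OF f, of i j] h by simp
  moreover have "Sg (a+c) (b+d) (i+1) j > 0" using SR_pos[OF f, of "i+1" j] h ne by simp
  ultimately show ?thesis using Hor h fa[OF f] by simp
next
  case (Dia i j)
  assume c: "crossI a b e"
  have h: "0 \<le> i" "i < b" "Sg a b (i+1) j > 0" "Sg a b i (j+1) < 0" using c Dia by auto
  have ne: "\<not> (i+1 = b \<and> j = a)" using h(3) Sg_ba0 by auto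
  have "Sg (a+c) (b+d) i (j+1) < 0" using SR_neg[OF f, of i "j+1"] h by simp
  moreover have "Sg (a+c) (b+d) (i+1) j > 0" using SR_pos[OF f, of "i+1" j] h ne by simp
  ultimately show ?thesis using Dia h fa[OF f] by simp
qed

lemma Sg_t_ba: "Sg (a+c) (b+d) b a = 1" using Sg_tb[OF f, of a] by simp

lemma M_in_t: "e \<in> set (Mlist a b d) \<Longrightarrow> crossI (a+c) (b+d) e"
proof -
  assume e: "e \<in> set (Mlist a b d)"
  have bc: "b*c = a*d + 1" using f by (simp add: farey_def)
  note fa = fa[OF f]
  have t1: "Sg (a+c) (b+d) b a = 1" by (rule Sg_t_ba)
  have t2: "Sg (a+c) (b+d) (b-1) a = 1 - a - c" using t1 by (simp add: Sg_def algebra_simps)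
  have t3: "Sg (a+c) (b+d) (b-1) (a+1) = 1 - a - c - b - d" using t1 by (simp add: Sg_def algebra_simps)
  have t4: "Sg (a+c) (b+d) b (a+1) = 1 - b - d" using t1 by (simp add: Sg_def algebra_simps)
  have "b - 1 + 1 = b" by simp
  show ?thesis using e fa t1 t2 t3 t4 unfolding Mlist_def by (auto split: if_splits)
qed

lemma s_to_t: "crossI c d e \<Longrightarrow> crossI (a+c) (b+d) (shE b a e)"
proof (cases e)
  case (Ver i j)
  assume c: "crossI c d e"
  have h: "0 < i" "i < d" "Sg c d i j > 0" "Sg c d i (j+1) < 0" using c Ver by auto
  have "Sg (a+c) (b+d) (i+b) (j+a) > 0" using SS_pos[OF f, where U=i and U'="i+b" and V=j and V'="j+a"] h by simp
  moreover have "Sg (a+c) (b+d) (i+b) (j+a+1) < 0"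
    using SS_neg[OF f, where U=i and U'="i+b" and V="j+1" and V'="j+a+1"] h by simp
  ultimately show ?thesis using Ver h fa[OF f] by simp
next
  case (Hor i j)
  assume c: "crossI c d e"
  have h: "0 \<le> i" "i < d" "Sg c d i j < 0" "Sg c d (i+1) j > 0" using c Hor by auto
  have "Sg (a+c) (b+d) (i+b) (j+a) < 0" using SS_neg[OF f, where U=i and U'="i+b" and V=j and V'="j+a"] h by simp
  moreover have "Sg (a+c) (b+d) (i+b+1) (j+a) > 0"
    using SS_pos[OF f, where U="i+1" and U'="i+b+1" and V=j and V'="j+a"] h by simp
  ultimately show ?thesis using Hor h fa[OF f] by simp
next
  case (Dia i j)
  assume c: "crossI c d e"
  have h: "0 \<le> i" "i < d" "Sg c d (i+1) j > 0" "Sg c d i (j+1) < 0" using c Dia by auto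
  have "Sg (a+c) (b+d) (i+b) (j+a+1) < 0"
    using SS_neg[OF f, where U=i and U'="i+b" and V="j+1" and V'="j+a+1"] h by simp
  moreover have "Sg (a+c) (b+d) (i+b+1) (j+a) > 0"
    using SS_pos[OF f, where U="i+1" and U'="i+b+1" and V=j and V'="j+a"] h by simp
  ultimately show ?thesis using Dia h fa[OF f] by simp
qed

end

lemma neg_times: "(x::int) \<le> -1 \<Longrightarrow> 1 \<le> q \<Longrightarrow> x*q \<le> -q"
proof -
  assume "x \<le> -1" "1 \<le> q"
  then have "x*q \<le> (-1)*q" by (intro mult_right_mono) auto
  then show ?thesis by simp
qed

lemma nonneg_times: "(x::int) \<ge> 0 \<Longrightarrow> 0 \<le> q \<Longrightarrow> x*q \<ge> 0"
  by simp

context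
  fixes a b c d :: int
  assumes f: "farey a b c d"
begin

lemma ver_b_case:
  assumes "Sg (a+c) (b+d) b j > 0" "Sg (a+c) (b+d) b (j+1) < 0"
  shows "j = a \<and> 0 < d"
proof -
  note fa = fa[OF f]
  have e1: "(a - j)*(b+d) + 1 > 0" and e2: "(a - (j+1))*(b+d) + 1 < 0"
    using assms Sg_tb[OF f] by auto
  have q1: "1 \<le> b+d" using fa by simp
  have "a - j \<ge> 0"
  proof (rule ccontr)
    assume "\<not> a - j \<ge> 0"
    then have "a - j \<le> -1" by simp
    then have "(a-j)*(b+d) \<le> -(b+d)" using neg_times q1 by blast
    then show False using e1 q1 by linarith
  qed
  moreover have "a - (j+1) < 0"
  proof (rule ccontr)
    assume "\<not> a - (j+1) < 0"
    then have "(a-(j+1))*(b+d) \<ge> 0" using q1 by simp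
    then show False using e2 by linarith
  qed
  ultimately have ja: "j = a" by simp
  then have "b + d \<ge> 2" using e2 by simp
  moreover have "d = 0 \<Longrightarrow> b = 1" using farey_d0[OF f] by simp
  ultimately show ?thesis using ja fa by force
qed

lemma t_split:
  assumes c: "crossI (a+c) (b+d) e"
  shows "crossI a b e \<or> e \<in> set (Mlist a b d) \<or> (\<exists>e'. crossI c d e' \<and> e = shE b a e')"
proof (cases e)
  case (Ver i j)
  note fa = fa[OF f]
  have h: "0 < i" "i < b+d" "Sg (a+c) (b+d) i j > 0" "Sg (a+c) (b+d) i (j+1) < 0" using c Ver by auto
  consider "i < b" | "i = b" | "i > b" by linarith
  then show ?thesis
  proof cases
    case 1
    have "Sg a b i j > 0" using SR_pos[OF f, of i j] h 1 by simp
    moreover have "Sg a b i (j+1) < 0" using SR_neg[OF f, of i "j+1"] h 1 by simp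
    ultimately show ?thesis using Ver h 1 by simp
  next
    case 2
    then have "j = a \<and> 0 < d" using ver_b_case h by simp
    then show ?thesis using Ver 2 by (simp add: Mlist_def)
  next
    case 3
    define i' where "i' = i - b"
    define j' where "j' = j - a"
    have r: "1 \<le> i'" "i' \<le> d" "1 \<le> d" using 3 h unfolding i'_def by auto
    have "Sg c d i' j' > 0" using SS_pos[OF f, where U=i' and U'=i and V=j' and V'=j] h r
      unfolding i'_def j'_def by simp
    moreover have "Sg c d i' (j'+1) < 0" using SS_neg[OF f, where U=i' and U'=i and V="j'+1" and V'="j+1"] h r
      unfolding i'_def j'_def by simp
    moreover have "i' < d" using h unfolding i'_def by simp
    ultimately have "crossI c d (Ver i' j')" using r by simp
    moreover have "e = shE b a (Ver i' j')" using Ver unfolding i'_def j'_def by simp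
    ultimately show ?thesis by blast
  qed
next
  case (Hor i j)
  note fa = fa[OF f]
  have h: "0 \<le> i" "i < b+d" "Sg (a+c) (b+d) i j < 0" "Sg (a+c) (b+d) (i+1) j > 0" using c Hor by auto
  consider "i \<le> b - 1" "i = b - 1 \<and> j = a" | "i \<le> b - 1" "\<not> (i = b - 1 \<and> j = a)" | "i \<ge> b" by linarith
  then show ?thesis
  proof cases
    case 1
    have "0 < a"
    proof (rule ccontr)
      assume "\<not> 0 < a"
      then have "a = 0" using fa by simp
      then have "b = 1" "c = 1" using farey_a0[OF f] by auto
      then show False using h 1 \<open>a = 0\<close> by (simp add: Sg_def)
    qed
    then show ?thesis using Hor 1 by (simp add: Mlist_def)
  next
    case 2
    have "Sg a b i j < 0" using SR_neg[OF f, of i j] h 2 by simp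
    moreover have "Sg a b (i+1) j > 0" using SR_pos[OF f, of "i+1" j] h 2 by auto
    ultimately show ?thesis using Hor h 2 by simp
  next
    case 3
    define i' where "i' = i - b"
    define j' where "j' = j - a"
    have r: "0 \<le> i'" "i' + 1 \<le> d" "1 \<le> d" using 3 h unfolding i'_def by auto
    have "Sg c d i' j' < 0" using SS_neg[OF f, where U=i' and U'=i and V=j' and V'=j] h r
      unfolding i'_def j'_def by simp
    moreover have "Sg c d (i'+1) j' > 0" using SS_pos[OF f, where U="i'+1" and U'="i+1" and V=j' and V'=j] h r
      unfolding i'_def j'_def by simp
    ultimately have "crossI c d (Hor i' j')" using r by simp
    moreover have "e = shE b a (Hor i' j')" using Hor unfolding i'_def j'_def by simp
    ultimately show ?thesis by blast
  qed
next
  case (Dia i j)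
  note fa = fa[OF f]
  have h: "0 \<le> i" "i < b+d" "Sg (a+c) (b+d) (i+1) j > 0" "Sg (a+c) (b+d) i (j+1) < 0" using c Dia by auto
  consider "i \<le> b - 1" "i = b - 1 \<and> j = a" | "i \<le> b - 1" "\<not> (i = b - 1 \<and> j = a)" | "i \<ge> b" by linarith
  then show ?thesis
  proof cases
    case 1
    then show ?thesis using Dia by (simp add: Mlist_def)
  next
    case 2
    have "Sg a b i (j+1) < 0" using SR_neg[OF f, of i "j+1"] h 2 by simp
    moreover have "Sg a b (i+1) j > 0" using SR_pos[OF f, of "i+1" j] h 2 by auto
    ultimately show ?thesis using Dia h 2 by simp
  next
    case 3
    define i' where "i' = i - b"
    define j' where "j' = j - a"
    have r: "0 \<le> i'" "i' + 1 \<le> d" "1 \<le> d" using 3 h unfolding i'_def by auto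
    have "Sg c d i' (j'+1) < 0" using SS_neg[OF f, where U=i' and U'=i and V="j'+1" and V'="j+1"] h r
      unfolding i'_def j'_def by simp
    moreover have "Sg c d (i'+1) j' > 0" using SS_pos[OF f, where U="i'+1" and U'="i+1" and V=j' and V'=j] h r
      unfolding i'_def j'_def by simp
    ultimately have "crossI c d (Dia i' j')" using r by simp
    moreover have "e = shE b a (Dia i' j')" using Dia unfolding i'_def j'_def by simp
    ultimately show ?thesis by blast
  qed
qed

end

fun ltc :: "int \<Rightarrow> int \<Rightarrow> edge \<Rightarrow> edge \<Rightarrow> bool" where
  "ltc p q (Ver i j) (Ver i' j') = (i < i')"
| "ltc p q (Ver i j) (Hor i' j') = (Sg p q i j' < 0)"
| "ltc p q (Ver i j) (Dia i' j') = (Sg p q i (i'+j'+1-i) < 0)"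
| "ltc p q (Hor i j) (Ver i' j') = (Sg p q i' j > 0)"
| "ltc p q (Hor i j) (Hor i' j') = (j < j')"
| "ltc p q (Hor i j) (Dia i' j') = (Sg p q (i'+j'+1-j) j > 0)"
| "ltc p q (Dia i j) (Ver i' j') = (Sg p q i' (i+j+1-i') > 0)"
| "ltc p q (Dia i j) (Hor i' j') = (Sg p q (i+j+1-j') j' < 0)"
| "ltc p q (Dia i j) (Dia i' j') = (i+j < i'+j')"

lemma Pn_less_iff:
  assumes p: "0 < p" and q: "0 < q"
  shows "Pn p q e < Pn p q e' \<longleftrightarrow> ltc p q e e'"
proof -
  have pq: "0 < p + q" using p q by simp
  have rq: "0 < real_of_int q" and rp: "0 < real_of_int p" and rpq: "0 < real_of_int p + real_of_int q"
    using p q by simp_all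
  show ?thesis
  proof (cases e)
    case (Ver i j)
    show ?thesis
    proof (cases e')
      case (Ver i' j') then show ?thesis using \<open>e = Ver i j\<close> rq by (simp add: divide_strict_right_mono_neg divide_less_cancel)
    next
      case (Hor i' j') then show ?thesis using \<open>e = Ver i j\<close> frac_less_int[OF q p, of i j'] by (simp add: Sg_def)
    next
      case (Dia i' j') then show ?thesis using \<open>e = Ver i j\<close> frac_less_int[OF q pq, of i "i'+j'+1"]
        by (simp add: Sg_def algebra_simps)
    qed
  next
    case (Hor i j)
    show ?thesis
    proof (cases e')
      case (Ver i' j') then show ?thesis using \<open>e = Hor i j\<close> frac_less_int[OF p q, of j i'] by (simp add: Sg_def)
    next
      case (Hor i' j') then show ?thesis using \<open>e = Hor i j\<close> rp by (simp add: divide_less_cancel)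
    next
      case (Dia i' j') then show ?thesis using \<open>e = Hor i j\<close> frac_less_int[OF p pq, of j "i'+j'+1"]
        by (simp add: Sg_def algebra_simps)
    qed
  next
    case (Dia i j)
    show ?thesis
    proof (cases e')
      case (Ver i' j') then show ?thesis using \<open>e = Dia i j\<close> frac_less_int[OF pq q, of "i+j+1" i']
        by (simp add: Sg_def algebra_simps)
    next
      case (Hor i' j') then show ?thesis using \<open>e = Dia i j\<close> frac_less_int[OF pq p, of "i+j+1" j']
        by (simp add: Sg_def algebra_simps)
    next
      case (Dia i' j') then show ?thesis using \<open>e = Dia i j\<close> rpq
        by (simp add: divide_less_cancel) (metis of_int_add of_int_less_iff)
    qed
  qed
qed

context
  fixes a b c d :: int
  assumes f: "farey a b c d"
begin

lemma ltc_r: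
  assumes c: "crossI a b e" "crossI a b e'" and l: "ltc a b e e'"
  shows "ltc (a+c) (b+d) e e'"
proof -
  note fa = fa[OF f]
  show ?thesis
  proof (cases e)
    case (Ver i j)
    have h: "0 < i" "i < b" using ver_b[OF fa(1)] c Ver by blast+
    show ?thesis
    proof (cases e')
      case (Ver i' j') then show ?thesis using l \<open>e = Ver i j\<close> by simp
    next
      case (Hor i' j') then show ?thesis using l \<open>e = Ver i j\<close> SR_neg[OF f, of i j'] h by simp
    next
      case (Dia i' j') then show ?thesis using l \<open>e = Ver i j\<close> SR_neg[OF f, of i "i'+j'+1-i"] h by simp
    qed
  next
    case (Hor i j)
    have h: "0 \<le> i" "i < b" "0 < j" "j < a" using hor_b[OF fa(1)] c Hor by blast+
    show ?thesis
    proof (cases e')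
      case (Ver i' j')
      have h': "0 < i'" "i' < b" using ver_b[OF fa(1)] c Ver by blast+
      then show ?thesis using l \<open>e = Hor i j\<close> Ver SR_pos[OF f, of i' j] by simp
    next
      case (Hor i' j') then show ?thesis using l \<open>e = Hor i j\<close> by simp
    next
      case (Dia i' j') then show ?thesis using l \<open>e = Hor i j\<close> SR_V[OF f, where V=j and U="i'+j'+1-j"] h by simp
    qed
  next
    case (Dia i j)
    have h: "0 \<le> i" "i < b" "0 \<le> j" "j < a" using dia_b[OF fa(1)] c Dia by blast+
    show ?thesis
    proof (cases e')
      case (Ver i' j')
      have h': "0 < i'" "i' < b" using ver_b[OF fa(1)] c Ver by blast+
      then show ?thesis using l \<open>e = Dia i j\<close> Ver SR_pos[OF f, of i' "i+j+1-i'"] by simp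
    next
      case (Hor i' j')
      have h': "0 < j'" "j' < a" using hor_b[OF fa(1)] c Hor by blast+
      then show ?thesis using l \<open>e = Dia i j\<close> Hor SR_V[OF f, where V=j' and U="i+j+1-j'"] by simp
    next
      case (Dia i' j') then show ?thesis using l \<open>e = Dia i j\<close> by simp
    qed
  qed
qed

lemma ltc_s:
  assumes c: "crossI c d e" "crossI c d e'" and l: "ltc c d e e'"
  shows "ltc (a+c) (b+d) (shE b a e) (shE b a e')"
proof -
  note fa = fa[OF f]
  have c0: "0 \<le> c" using fa by simp
  show ?thesis
  proof (cases e)
    case (Ver i j)
    have h: "0 < i" "i < d" using ver_b[OF c0] c Ver by blast+
    show ?thesis
    proof (cases e')
      case (Ver i' j') then show ?thesis using l \<open>e = Ver i j\<close> by simp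
    next
      case (Hor i' j') then show ?thesis using l \<open>e = Ver i j\<close>
          SS_neg[OF f, where U=i and U'="i+b" and V=j' and V'="j'+a"] h by simp
    next
      case (Dia i' j') then show ?thesis using l \<open>e = Ver i j\<close>
          SS_neg[OF f, where U=i and U'="i+b" and V="i'+j'+1-i" and V'="i'+b+(j'+a)+1-(i+b)"] h by simp
    qed
  next
    case (Hor i j)
    have h: "0 \<le> i" "i < d" "0 < j" "j < c" using hor_b[OF c0] c Hor by blast+
    show ?thesis
    proof (cases e')
      case (Ver i' j')
      have h': "0 < i'" "i' < d" using ver_b[OF c0] c Ver by blast+
      then show ?thesis using l \<open>e = Hor i j\<close> Ver
          SS_pos[OF f, where U=i' and U'="i'+b" and V=j and V'="j+a"] by simp
    next
      case (Hor i' j') then show ?thesis using l \<open>e = Hor i j\<close> by simp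
    next
      case (Dia i' j') then show ?thesis using l \<open>e = Hor i j\<close>
          SS_V[OF f, where V=j and U="i'+j'+1-j" and U'="i'+b+(j'+a)+1-(j+a)" and V'="j+a"] h by simp
    qed
  next
    case (Dia i j)
    have h: "0 \<le> i" "i < d" "0 \<le> j" "j < c" using dia_b[OF c0] c Dia by blast+
    show ?thesis
    proof (cases e')
      case (Ver i' j')
      have h': "0 < i'" "i' < d" using ver_b[OF c0] c Ver by blast+
      then show ?thesis using l \<open>e = Dia i j\<close> Ver
          SS_pos[OF f, where U=i' and U'="i'+b" and V="i+j+1-i'" and V'="i+b+(j+a)+1-(i'+b)"] by simp
    next
      case (Hor i' j')
      have h': "0 < j'" "j' < c" using hor_b[OF c0] c Hor by blast+
      then show ?thesis using l \<open>e = Dia i j\<close> Hor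
          SS_V[OF f, where V=j' and U="i+j+1-j'" and U'="i+b+(j+a)+1-(j'+a)" and V'="j'+a"] by simp
    next
      case (Dia i' j') then show ?thesis using l \<open>e = Dia i j\<close> by simp
    qed
  qed
qed

lemma r_lt_M:
  assumes c: "crossI a b e"
  shows "ltc (a+c) (b+d) e (Hor (b-1) a)"
proof -
  note fa = fa[OF f]
  show ?thesis
  proof (cases e)
    case (Ver i j)
    have h: "0 < i" "i < b" "0 \<le> j" "j < a" using ver_b[OF fa(1)] c Ver by blast+
    have "a*(i-b) < 0" using h by (simp add: mult_pos_neg)
    then have "Sg a b i a < 0" by (simp add: Sg_def algebra_simps)
    then show ?thesis using Ver SR_neg[OF f, of i a] h by simp
  next
    case (Hor i j)
    have h: "0 < j" "j < a" using hor_b[OF fa(1)] c Hor by blast+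
    then show ?thesis using Hor by simp
  next
    case (Dia i j)
    have h: "0 \<le> i" "i < b" "0 \<le> j" "j < a" using dia_b[OF fa(1)] c Dia by blast+
    define U where "U = i+j+1-a"
    have "Sg (a+c) (b+d) U a < 0"
    proof (cases "0 \<le> U")
      case True
      have "a*(U-b) < 0" using h True unfolding U_def by (simp add: mult_pos_neg)
      then have "Sg a b U a < 0" by (simp add: Sg_def algebra_simps)
      then show ?thesis using SR_neg[OF f, of U a] h True unfolding U_def by simp
    next
      case False
      have "U*(a+c) < 0" using False fa by (simp add: mult_neg_pos)
      moreover have "0 \<le> a*(b+d)" using fa by simp
      ultimately show ?thesis by (simp add: Sg_def)
    qed
    then show ?thesis using Dia unfolding U_def by simp
  qed
qed

lemma M_ltc:
  "ltc (a+c) (b+d) (Hor (b-1) a) (Dia (b-1) a)"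
  "ltc (a+c) (b+d) (Dia (b-1) a) (Ver b a)"
  "ltc (a+c) (b+d) (Hor (b-1) a) (Ver b a)"
  using Sg_t_ba[OF f] by simp_all

lemma M_lt_s:
  assumes c: "crossI c d e" and d1: "1 \<le> d"
  shows "ltc (a+c) (b+d) (Ver b a) (shE b a e)"
proof -
  note fa = fa[OF f]
  have c0: "0 \<le> c" using fa by simp
  have q2: "1 \<le> b + d" using fa by simp
  show ?thesis
  proof (cases e)
    case (Ver i j)
    have h: "0 < i" using ver_b[OF c0] c Ver by blast+
    then show ?thesis using Ver by simp
  next
    case (Hor i j)
    have h: "0 < j" using hor_b[OF c0] c Hor by blast+
    have "-j \<le> -1" using h by simp
    then have "(-j)*(b+d) \<le> -(b+d)" using neg_times[OF _ q2] by blast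
    then have "Sg (a+c) (b+d) b (j+a) < 0" using Sg_tb[OF f, of "j+a"] fa d1 by simp
    then show ?thesis using Hor by simp
  next
    case (Dia i j)
    have h: "0 \<le> i" "0 \<le> j" using dia_b[OF c0] c Dia by blast+
    have "-(i+j+1) \<le> -1" using h by simp
    then have "(-(i+j+1))*(b+d) \<le> -(b+d)" using neg_times[OF _ q2] by blast
    then have "Sg (a+c) (b+d) b (i+j+1+a) < 0" using Sg_tb[OF f, of "i+j+1+a"] fa d1 by (simp add: algebra_simps)
    then show ?thesis using Dia by (simp add: algebra_simps)
  qed
qed

end

lemma crossI_pos: "0 \<le> p \<Longrightarrow> crossI p q e \<Longrightarrow> 0 < p \<and> 0 < q"
proof (cases e)
  case (Ver i j)
  assume "0 \<le> p" "crossI p q e"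
  then have "0 < i \<and> i < q \<and> 0 \<le> j \<and> j < p" using ver_b Ver by blast
  then show ?thesis by linarith
next
  case (Hor i j)
  assume "0 \<le> p" "crossI p q e"
  then have "0 \<le> i \<and> i < q \<and> 0 < j \<and> j < p" using hor_b Hor by blast
  then show ?thesis by linarith
next
  case (Dia i j)
  assume "0 \<le> p" "crossI p q e"
  then have "0 \<le> i \<and> i < q \<and> 0 \<le> j \<and> j < p" using dia_b Dia by blast
  then show ?thesis by linarith
qed

lemma sorted_map_mono:
  assumes "sorted (map f xs)" "\<And>x y. x \<in> set xs \<Longrightarrow> y \<in> set xs \<Longrightarrow> f x \<le> f y \<Longrightarrow> g x \<le> g y"
  shows "sorted (map g xs)"
proof -
  have "sorted_wrt (\<lambda>x y. f x \<le> f y) xs" using assms(1) by (simp add: sorted_wrt_map)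
  then have "sorted_wrt (\<lambda>x y. g x \<le> g y) xs" by (rule sorted_wrt_mono_rel[rotated]) (use assms(2) in auto)
  then show ?thesis by (simp add: sorted_wrt_map)
qed

lemma inj_shE: "inj (shE b a)"
proof (rule injI)
  fix x y assume "shE b a x = shE b a y" then show "x = y" by (cases x; cases y) auto
qed

context
  fixes a b c d :: int
  assumes f: "farey a b c d"
begin

lemma enum_t:
  assumes er: "enum a b esr" and es: "enum c d ess"
  shows "enum (a+c) (b+d) (esr @ Mlist a b d @ map (shE b a) ess)"
proof -
  note fa = fa[OF f]
  define P where "P = Pn (a+c) (b+d)"
  have pq: "0 < a+c" "0 < b+d" using fa by auto
  have Plt: "ltc (a+c) (b+d) x y \<Longrightarrow> P x < P y" for x y using Pn_less_iff[OF pq] unfolding P_def by blast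
  have sr: "set esr = {e. crossI a b e}" "distinct esr" "sorted (map (Pn a b) esr)" using er by (auto simp: enum_def)
  have ss: "set ess = {e. crossI c d e}" "distinct ess" "sorted (map (Pn c d) ess)" using es by (auto simp: enum_def)
  define M where "M = Mlist a b d"
  have setE: "set (esr @ M @ map (shE b a) ess) = {e. crossI (a+c) (b+d) e}"
  proof
    show "set (esr @ M @ map (shE b a) ess) \<subseteq> {e. crossI (a+c) (b+d) e}"
      using sr ss r_to_t[OF f] M_in_t[OF f] s_to_t[OF f] unfolding M_def by auto
    show "{e. crossI (a+c) (b+d) e} \<subseteq> set (esr @ M @ map (shE b a) ess)"
    proof
      fix e assume "e \<in> {e. crossI (a+c) (b+d) e}"
      then have "crossI a b e \<or> e \<in> set M \<or> (\<exists>e'. crossI c d e' \<and> e = shE b a e')"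
        using t_split[OF f] unfolding M_def by blast
      then show "e \<in> set (esr @ M @ map (shE b a) ess)"
      proof (elim disjE exE conjE)
        fix e' assume "crossI c d e'" "e = shE b a e'"
        then have "e' \<in> set ess" using ss by simp
        then show ?thesis using \<open>e = shE b a e'\<close> by simp
      qed (use sr in auto)
    qed
  qed
  have r_a: "x \<in> set esr \<Longrightarrow> 0 < a" for x using sr crossI_pos[OF fa(1)] by auto
  have s_d: "y \<in> set ess \<Longrightarrow> 0 < d" for y using ss crossI_pos[of c d y] fa by auto
  have rM: "x \<in> set esr \<Longrightarrow> P x < P (Hor (b-1) a)" for x
    using Plt r_lt_M[OF f] sr by auto
  have sM: "y \<in> set ess \<Longrightarrow> P (Ver b a) < P (shE b a y)" for y
  proof -
    assume y: "y \<in> set ess"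
    have "0 < d" using s_d[OF y] .
    then have "1 \<le> d" by simp
    moreover have "crossI c d y" using ss y by auto
    ultimately show ?thesis using Plt M_lt_s[OF f] by blast
  qed
  have MHD: "P (Hor (b-1) a) < P (Dia (b-1) a)" "P (Dia (b-1) a) < P (Ver b a)" "P (Hor (b-1) a) < P (Ver b a)"
    using Plt M_ltc[OF f] by auto
  have Mset: "set M = (if 0 < a then {Hor (b-1) a} else {}) \<union> {Dia (b-1) a} \<union> (if 0 < d then {Ver b a} else {})"
    unfolding M_def Mlist_def by auto
  have Mlo: "0 < a \<Longrightarrow> m \<in> set M \<Longrightarrow> P (Hor (b-1) a) \<le> P m" for m
    using MHD unfolding Mset by (auto split: if_splits)
  have Mhi: "0 < d \<Longrightarrow> m \<in> set M \<Longrightarrow> P m \<le> P (Ver b a)" for m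
    using MHD unfolding Mset by (auto split: if_splits)
  have sortM: "sorted (map P M)"
    using MHD unfolding M_def Mlist_def by (auto simp: less_imp_le)
  have sort_r: "sorted (map P esr)"
  proof (rule sorted_map_mono[OF sr(3)])
    fix x y assume xy: "x \<in> set esr" "y \<in> set esr" "Pn a b x \<le> Pn a b y"
    have ab: "0 < a" "0 < b" using crossI_pos[OF fa(1)] xy sr by auto
    show "P x \<le> P y"
    proof (cases "x = y")
      case False
      then have "Pn a b x \<noteq> Pn a b y" using Pn_inj[OF ab] xy sr by auto
      then have "Pn a b x < Pn a b y" using xy by simp
      then have "ltc a b x y" using Pn_less_iff[OF ab] by blast
      then have "ltc (a+c) (b+d) x y" using ltc_r[OF f] xy sr by auto
      then show ?thesis using Plt by (simp add: less_imp_le)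
    qed simp
  qed
  have sort_s: "sorted (map P (map (shE b a) ess))"
  proof -
    have "sorted (map (\<lambda>y. P (shE b a y)) ess)"
    proof (rule sorted_map_mono[OF ss(3)])
      fix x y assume xy: "x \<in> set ess" "y \<in> set ess" "Pn c d x \<le> Pn c d y"
      have cd: "0 < c" "0 < d" using crossI_pos[of c d x] fa xy ss by auto
      show "P (shE b a x) \<le> P (shE b a y)"
      proof (cases "x = y")
        case False
        then have "Pn c d x \<noteq> Pn c d y" using Pn_inj[OF cd] xy ss by auto
        then have "Pn c d x < Pn c d y" using xy by simp
        then have "ltc c d x y" using Pn_less_iff[OF cd] by blast
        then have "ltc (a+c) (b+d) (shE b a x) (shE b a y)" using ltc_s[OF f] xy ss by auto
        then show ?thesis using Plt by (simp add: less_imp_le)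
      qed simp
    qed
    then show ?thesis by (simp add: comp_def)
  qed
  have c1: "x \<in> set esr \<Longrightarrow> m \<in> set M \<Longrightarrow> P x < P m" for x m
  proof -
    assume x: "x \<in> set esr" and m: "m \<in> set M"
    show ?thesis using rM[OF x] Mlo[OF r_a[OF x] m] by linarith
  qed
  have c2: "m \<in> set M \<Longrightarrow> y \<in> set ess \<Longrightarrow> P m < P (shE b a y)" for m y
  proof -
    assume y: "y \<in> set ess" and m: "m \<in> set M"
    show ?thesis using sM[OF y] Mhi[OF s_d[OF y] m] by linarith
  qed
  have c3: "x \<in> set esr \<Longrightarrow> y \<in> set ess \<Longrightarrow> P x < P (shE b a y)" for x y
  proof -
    assume "x \<in> set esr" "y \<in> set ess"
    then show ?thesis using rM sM MHD(3) by (meson less_trans)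
  qed
  have sorted: "sorted (map P (esr @ M @ map (shE b a) ess))"
    unfolding map_append sorted_append
  proof (intro conjI ballI)
    fix x y assume "x \<in> set (map P esr)" "y \<in> set (map P M @ map P (map (shE b a) ess))"
    then obtain x' y' where "x' \<in> set esr" "x = P x'" "y' \<in> set M \<or> y' \<in> shE b a ` set ess" "y = P y'"
      by auto
    then show "x \<le> y" using c1 c3 by (auto intro: less_imp_le)
  next
    fix x y assume "x \<in> set (map P M)" "y \<in> set (map P (map (shE b a) ess))"
    then obtain x' y' where "x' \<in> set M" "x = P x'" "y' \<in> set ess" "y = P (shE b a y')"
      by auto
    then show "x \<le> y" using c2 by (auto intro: less_imp_le)
  qed (use sort_r sortM sort_s in auto)
  have dM: "distinct M" unfolding M_def Mlist_def by auto
  have dS: "distinct (map (shE b a) ess)" using ss inj_shE by (simp add: distinct_map inj_on_def inj_def)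
  have i1: "set esr \<inter> set (M @ map (shE b a) ess) = {}"
  proof (rule ccontr)
    assume "set esr \<inter> set (M @ map (shE b a) ess) \<noteq> {}"
    then obtain x where "x \<in> set esr" "x \<in> set M \<or> x \<in> shE b a ` set ess" by auto
    then show False using c1 c3 by auto
  qed
  have i2: "set M \<inter> set (map (shE b a) ess) = {}"
  proof (rule ccontr)
    assume "set M \<inter> set (map (shE b a) ess) \<noteq> {}"
    then obtain x where "x \<in> set M" "x \<in> shE b a ` set ess" by auto
    then show False using c2 by auto
  qed
  have distinct: "distinct (esr @ M @ map (shE b a) ess)"
    using sr(2) dM dS i1 i2 by (simp only: distinct_append)
  show ?thesis unfolding enum_def using setE sorted distinct unfolding P_def M_def by simp
qed

end

lemma mid_iff:
  assumes p: "0 < p" and q: "0 < q" and c: "crossI p q e"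
  shows "(mx2 e = q \<and> my2 e = p) \<longleftrightarrow> Pn p q e = 1/2"
proof
  assume h: "mx2 e = q \<and> my2 e = p"
  have rq: "real_of_int q \<noteq> 0" "real_of_int p \<noteq> 0" "real_of_int p + real_of_int q \<noteq> 0" using p q by auto
  show "Pn p q e = 1/2"
  proof (cases e)
    case (Ver i j)
    then have "q = 2*i" using h by simp
    then have "real_of_int q = 2 * real_of_int i" by simp
    then show ?thesis using Ver rq by (simp add: field_simps)
  next
    case (Hor i j)
    then have "p = 2*j" using h by simp
    then have "real_of_int p = 2 * real_of_int j" by simp
    then show ?thesis using Hor rq by (simp add: field_simps)
  next
    case (Dia i j)
    then have "p + q = 2*(i+j+1)" using h by simp
    then have "real_of_int p + real_of_int q = 2 * real_of_int (i+j+1)" by (metis of_int_add of_int_mult of_int_numeral)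
    then show ?thesis using Dia rq by (simp add: field_simps)
  qed
next
  assume h: "Pn p q e = 1/2"
  have "Pn p q (rfl p q e) = 1/2" using Pn_rfl[OF p q] h by simp
  then have "rfl p q e = e" using Pn_inj[OF p q rfl_cross[OF c] c] h by simp
  then show "mx2 e = q \<and> my2 e = p" by (cases e) auto
qed

context
  fixes a b c d :: int
  assumes f: "farey a b c d"
begin

lemma posI_r:
  assumes c: "crossI a b e"
  shows "Pn a b e \<noteq> 1/2 \<Longrightarrow> posI (a+c) (b+d) e = posI a b e"
    and "Pn a b e = 1/2 \<Longrightarrow> posI a b e \<and> \<not> posI (a+c) (b+d) e"
proof -
  note fa = fa[OF f]
  have ab: "0 < a" "0 < b" using crossI_pos[OF fa(1) c] by auto
  have bnd: "1 \<le> mx2 e \<and> mx2 e \<le> 2*b - 1"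
  proof (cases e)
    case (Ver i j) then show ?thesis using ver_b[OF fa(1)] c by fastforce
  next
    case (Hor i j) then show ?thesis using hor_b[OF fa(1)] c by fastforce
  next
    case (Dia i j) then show ?thesis using dia_b[OF fa(1)] c by fastforce
  qed
  show "posI (a+c) (b+d) e = posI a b e" if "Pn a b e \<noteq> 1/2"
  proof -
    have "\<not> (mx2 e = b \<and> my2 e = a)" using mid_iff[OF ab(1) ab(2) c] that by simp
    then show ?thesis unfolding posI_def using SL_R[OF f, of "mx2 e" "my2 e"] bnd by simp
  qed
  show "posI a b e \<and> \<not> posI (a+c) (b+d) e" if "Pn a b e = 1/2"
  proof -
    have m: "mx2 e = b \<and> my2 e = a" using mid_iff[OF ab(1) ab(2) c] that by simp
    then show ?thesis unfolding posI_def using Sg_t_ba[OF f] Sg_ba0[OF f] by simp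
  qed
qed

lemma mx2_sh: "mx2 (shE b a e) = mx2 e + 2*b" by (cases e) auto
lemma my2_sh: "my2 (shE b a e) = my2 e + 2*a" by (cases e) auto
lemma gen_sh: "edge_gen (shE b a e) = edge_gen e" by (cases e) auto

lemma posI_s:
  assumes c: "crossI c d e"
  shows "Pn c d e \<noteq> 1/2 \<Longrightarrow> posI (a+c) (b+d) (shE b a e) = posI c d e"
    and "Pn c d e = 1/2 \<Longrightarrow> posI c d e \<and> \<not> posI (a+c) (b+d) (shE b a e)"
proof -
  note fa = fa[OF f]
  have c0: "0 \<le> c" using fa by simp
  have cd: "0 < c" "0 < d" using crossI_pos[OF c0 c] by auto
  have bnd: "1 \<le> mx2 e \<and> mx2 e \<le> 2*d - 1"
  proof (cases e)
    case (Ver i j) then show ?thesis using ver_b[OF c0] c by fastforce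
  next
    case (Hor i j) then show ?thesis using hor_b[OF c0] c by fastforce
  next
    case (Dia i j) then show ?thesis using dia_b[OF c0] c by fastforce
  qed
  show "posI (a+c) (b+d) (shE b a e) = posI c d e" if "Pn c d e \<noteq> 1/2"
  proof -
    have "\<not> (mx2 e = d \<and> my2 e = c)" using mid_iff[OF cd(1) cd(2) c] that by simp
    then show ?thesis unfolding posI_def mx2_sh my2_sh
      using SL_S[OF f, where U="mx2 e" and V="my2 e" and U'="mx2 e + 2*b" and V'="my2 e + 2*a"] bnd by simp
  qed
  show "posI c d e \<and> \<not> posI (a+c) (b+d) (shE b a e)" if "Pn c d e = 1/2"
  proof -
    have m: "mx2 e = d \<and> my2 e = c" using mid_iff[OF cd(1) cd(2) c] that by simp
    have bc: "b*c = a*d + 1" using f by (simp add: farey_def)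
    have "Sg (a+c) (b+d) (d + 2*b) (c + 2*a) = Sg a b d c + Sg c d d c + 2"
      by (rule Sg_shift2[OF f]) simp_all
    also have "\<dots> = 1" using bc by (simp add: Sg_def algebra_simps)
    finally show ?thesis unfolding posI_def mx2_sh my2_sh using m by (simp add: Sg_def)
  qed
qed

lemma posI_M:
  "0 < a \<Longrightarrow> posI (a+c) (b+d) (Hor (b-1) a)"
  "posI (a+c) (b+d) (Dia (b-1) a)"
  "0 < d \<Longrightarrow> posI (a+c) (b+d) (Ver b a)"
proof -
  note fa = fa[OF f]
  have t1: "Sg (a+c) (b+d) b a = 1" by (rule Sg_t_ba[OF f])
  have e1: "Sg (a+c) (b+d) (2*(b-1)+1) (2*a) = 2 - a - c" using t1 by (simp add: Sg_def algebra_simps)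
  have e2: "Sg (a+c) (b+d) (2*(b-1)+1) (2*a+1) = 2 - a - c - b - d" using t1 by (simp add: Sg_def algebra_simps)
  have e3: "Sg (a+c) (b+d) (2*b) (2*a+1) = 2 - b - d" using t1 by (simp add: Sg_def algebra_simps)
  show "0 < a \<Longrightarrow> posI (a+c) (b+d) (Hor (b-1) a)" unfolding posI_def using e1 fa by simp
  show "posI (a+c) (b+d) (Dia (b-1) a)" unfolding posI_def using e2 fa by simp
  show "0 < d \<Longrightarrow> posI (a+c) (b+d) (Ver b a)" unfolding posI_def using e3 fa by simp
qed

end

lemma fv_inv: "farey_vertex x \<Longrightarrow> (case x of ((a,b),(p,q),(c,d)) \<Rightarrow> p = a + c \<and> q = b + d \<and> b*c = a*d + 1)"
proof (induction rule: farey_vertex.induct)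
  case root
  then show ?case by simp
next
  case (left a b c d e f)
  then show ?case by (simp add: algebra_simps)
next
  case (right a b c d e f)
  then show ?case by (simp add: algebra_simps)
qed

lemma coprime_nat: "(x::nat) * u = y * v + 1 \<Longrightarrow> gcd x y = 1"
proof -
  assume h: "x * u = y * v + 1"
  have "gcd x y dvd x * u" "gcd x y dvd y * v" by simp_all
  then have "gcd x y dvd x * u - y * v" by (rule dvd_diff_nat)
  with h have "gcd x y dvd 1" by simp
  then show ?thesis by simp
qed

lemma omega_pos: "gcd x y = 1 \<Longrightarrow> 0 < x \<Longrightarrow> 0 < y \<Longrightarrow> omega (x,y) = omega_geom x y"
  by (simp add: omega_def Let_def)

lemma r_part:
  fixes a b c d :: nat
  assumes f: "farey (int a) (int b) (int c) (int d)" and a: "0 < a"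
    and er: "enum (int a) (int b) esr" and w: "omega_geom a b = u @ [\<beta>] @ inv_word u"
  shows "map (edge_letter (a+c) (b+d)) esr = u @ [inv_letter \<beta>] @ inv_word u"
proof -
  have b: "0 < b" using f by (simp add: farey_def)
  have ia: "0 < int a" "0 < int b" using a b by simp_all
  have m: "map (edge_letter a b) esr = u @ [\<beta>] @ inv_word u" using omega_geom_eq[OF a b er] w by simp
  show ?thesis
  proof (rule flip_word[OF ia er m])
    fix e assume e: "e \<in> set esr"
    then have c: "crossI (int a) (int b) e" using er by (simp add: enum_def)
    {
      assume "Pn (int a) (int b) e \<noteq> 1/2"
      then show "edge_letter (a+c) (b+d) e = edge_letter a b e"
        using posI_r(1)[OF f c] by (simp add: edge_letter_eq)
    }
    {
      assume "Pn (int a) (int b) e = 1/2"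
      then show "edge_letter (a+c) (b+d) e = inv_letter (edge_letter a b e)"
        using posI_r(2)[OF f c] by (simp add: edge_letter_eq inv_letter_def)
    }
  qed
qed

lemma s_part:
  fixes a b c d :: nat
  assumes f: "farey (int a) (int b) (int c) (int d)" and d: "0 < d"
    and es: "enum (int c) (int d) ess" and w: "omega_geom c d = u @ [\<beta>] @ inv_word u"
  shows "map (edge_letter (a+c) (b+d)) (map (shE (int b) (int a)) ess) = u @ [inv_letter \<beta>] @ inv_word u"
proof -
  have c: "0 < c" using f by (simp add: farey_def)
  have ic: "0 < int c" "0 < int d" using c d by simp_all
  have m: "map (edge_letter c d) ess = u @ [\<beta>] @ inv_word u" using omega_geom_eq[OF c d es] w by simp
  have "map (edge_letter (a+c) (b+d) \<circ> shE (int b) (int a)) ess = u @ [inv_letter \<beta>] @ inv_word u"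
  proof (rule flip_word[OF ic es m])
    fix e assume e: "e \<in> set ess"
    then have cr: "crossI (int c) (int d) e" using es by (simp add: enum_def)
    {
      assume "Pn (int c) (int d) e \<noteq> 1/2"
      then show "(edge_letter (a+c) (b+d) \<circ> shE (int b) (int a)) e = edge_letter c d e"
        using posI_s(1)[OF f cr] gen_sh[OF f] by (simp add: edge_letter_eq)
    }
    {
      assume "Pn (int c) (int d) e = 1/2"
      then show "(edge_letter (a+c) (b+d) \<circ> shE (int b) (int a)) e = inv_letter (edge_letter c d e)"
        using posI_s(2)[OF f cr] gen_sh[OF f] by (simp add: edge_letter_eq inv_letter_def)
    }
  qed
  then show ?thesis by simp
qed

theorem proposition3p9:
  fixes r t s :: frac
  assumes V: "farey_vertex (r, t, s)"
    and tpos: "fst t > 0" "snd t > 0"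
  shows
    "(r = (0,1) \<and> s \<noteq> (1,0) \<longrightarrow>
       (\<forall>w \<alpha>. \<alpha> \<in> {lx, ly, lz} \<and> omega s = w @ [\<alpha>] @ inv_word w \<longrightarrow>
          omega t = [ly, lz] @ w @ [inv_letter \<alpha>] @ inv_word w))
   \<and> (r \<noteq> (0,1) \<and> s = (1,0) \<longrightarrow>
       (\<forall>u \<beta>. \<beta> \<in> {lx, ly, lz} \<and> omega r = u @ [\<beta>] @ inv_word u \<longrightarrow>
          omega t = u @ [inv_letter \<beta>] @ inv_word u @ [lx, ly]))
   \<and> (r \<noteq> (0,1) \<and> s \<noteq> (1,0) \<longrightarrow>
       (\<forall>u \<beta> w \<alpha>. \<beta> \<in> {lx, ly, lz} \<and> \<alpha> \<in> {lx, ly, lz} \<and>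
          omega r = u @ [\<beta>] @ inv_word u \<and> omega s = w @ [\<alpha>] @ inv_word w \<longrightarrow>
          omega t = u @ [inv_letter \<beta>] @ inv_word u @ [lx, ly, lz] @ w @ [inv_letter \<alpha>] @ inv_word w))"
proof -
  obtain a b c d where r: "r = (a,b)" and s: "s = (c,d)" and t: "t = (a+c,b+d)" and bc: "b*c = a*d+1"
  proof -
    obtain a b where r: "r = (a,b)" by (cases r)
    obtain c d where s: "s = (c,d)" by (cases s)
    obtain p q where t: "t = (p,q)" by (cases t)
    have "p = a + c \<and> q = b + d \<and> b*c = a*d + 1" using fv_inv[OF V] r s t by simp
    then show ?thesis using that r s t by auto
  qed
  have "b*c \<noteq> 0" using bc by simp
  then have b1: "0 < b" and c1: "0 < c" by auto
  have "int (b*c) = int (a*d+1)" using bc by simp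
  then have f: "farey (int a) (int b) (int c) (int d)" unfolding farey_def using b1 c1 by simp
  obtain esr where er: "enum (int a) (int b) esr" using enum_exists[of "int a"] by auto
  obtain ess where es: "enum (int c) (int d) ess" using enum_exists[of "int c"] by auto
  define M where "M = Mlist (int a) (int b) (int d)"
  have et: "enum (int (a+c)) (int (b+d)) (esr @ M @ map (shE (int b) (int a)) ess)"
    using enum_t[OF f er es] unfolding M_def by simp
  have "(b+d)*c = (a+c)*d + 1" using bc by (simp add: algebra_simps)
  then have "gcd (b+d) (a+c) = 1" by (rule coprime_nat)
  then have gt: "gcd (a+c) (b+d) = 1" by (simp add: gcd.commute)
  have apc: "0 < a + c" "0 < b + d" using b1 c1 by auto
  define g where "g = edge_letter (a+c) (b+d)"
  have omt: "omega t = map g esr @ map g M @ map g (map (shE (int b) (int a)) ess)"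
    using omega_pos[OF gt apc] omega_geom_eq[OF apc et] t unfolding g_def by simp
  have gl: "g e = (edge_gen e, posI (int a + int c) (int b + int d) e)" for e
    unfolding g_def by (simp add: edge_letter_eq)
  have r01: "r = (0,1) \<longleftrightarrow> a = 0"
  proof
    assume "a = 0" then have "b*c = 1" using bc by simp
    then have "b = 1" by simp
    then show "r = (0,1)" using r \<open>a = 0\<close> by simp
  qed (use r in simp)
  have s10: "s = (1,0) \<longleftrightarrow> d = 0"
  proof
    assume "d = 0" then have "b*c = 1" using bc by simp
    then have "c = 1" by simp
    then show "s = (1,0)" using s \<open>d = 0\<close> by simp
  qed (use s in simp)
  have esr0: "a = 0 \<Longrightarrow> esr = []"
  proof -
    assume "a = 0"
    then have "set esr = {}" using er crossI_pos[of "int a" "int b"] by (auto simp: enum_def)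
    then show ?thesis by simp
  qed
  have ess0: "d = 0 \<Longrightarrow> ess = []"
  proof -
    assume "d = 0"
    then have "set ess = {}" using es crossI_pos[of "int c" "int d"] by (auto simp: enum_def)
    then show ?thesis by simp
  qed
  have omr: "0 < a \<Longrightarrow> omega r = omega_geom a b"
  proof -
    assume a: "0 < a"
    have "gcd b a = 1" using bc by (rule coprime_nat)
    then have "gcd a b = 1" by (simp add: gcd.commute)
    then show ?thesis using omega_pos a b1 r by simp
  qed
  have oms: "0 < d \<Longrightarrow> omega s = omega_geom c d"
  proof -
    assume d: "0 < d"
    have "c*b = d*a + 1" using bc by (simp add: algebra_simps)
    then have "gcd c d = 1" by (rule coprime_nat)
    then show ?thesis using omega_pos d c1 s by simp
  qed
  have Mv: "map g M = (if 0 < a then [lx] else []) @ [ly] @ (if 0 < d then [lz] else [])"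
    using posI_M[OF f] unfolding M_def Mlist_def by (auto simp: gl)
  show ?thesis
  proof (intro conjI impI allI)
    fix w \<alpha>
    assume h: "r = (0,1) \<and> s \<noteq> (1,0)" "\<alpha> \<in> {lx, ly, lz} \<and> omega s = w @ [\<alpha>] @ inv_word w"
    have a0: "a = 0" and d0: "0 < d" using h r01 s10 by auto
    have "map g (map (shE (int b) (int a)) ess) = w @ [inv_letter \<alpha>] @ inv_word w"
      unfolding g_def using s_part[OF f d0 es] h oms[OF d0] by simp
    then show "omega t = [ly, lz] @ w @ [inv_letter \<alpha>] @ inv_word w"
      using omt esr0[OF a0] Mv a0 d0 by simp
  next
    fix u \<beta>
    assume h: "r \<noteq> (0,1) \<and> s = (1,0)" "\<beta> \<in> {lx, ly, lz} \<and> omega r = u @ [\<beta>] @ inv_word u"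
    have a0: "0 < a" and d0: "d = 0" using h r01 s10 by auto
    have "map g esr = u @ [inv_letter \<beta>] @ inv_word u"
      unfolding g_def using r_part[OF f a0 er] h omr[OF a0] by simp
    then show "omega t = u @ [inv_letter \<beta>] @ inv_word u @ [lx, ly]"
      using omt ess0[OF d0] Mv a0 d0 by simp
  next
    fix u \<beta> w \<alpha>
    assume h: "r \<noteq> (0,1) \<and> s \<noteq> (1,0)"
      "\<beta> \<in> {lx, ly, lz} \<and> \<alpha> \<in> {lx, ly, lz} \<and> omega r = u @ [\<beta>] @ inv_word u \<and> omega s = w @ [\<alpha>] @ inv_word w"
    have a0: "0 < a" and d0: "0 < d" using h r01 s10 by auto
    have "map g esr = u @ [inv_letter \<beta>] @ inv_word u"
      unfolding g_def using r_part[OF f a0 er] h omr[OF a0] by simp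
    moreover have "map g (map (shE (int b) (int a)) ess) = w @ [inv_letter \<alpha>] @ inv_word w"
      unfolding g_def using s_part[OF f d0 es] h oms[OF d0] by simp
    ultimately show "omega t = u @ [inv_letter \<beta>] @ inv_word u @ [lx, ly, lz] @ w @ [inv_letter \<alpha>] @ inv_word w"
      using omt Mv a0 d0 by simp
  qed
qed

end
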